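(* Suppose Assumptions (NC) and (B) hold and let $\hat h,\hat q$ be the estimators without stabilizers defined in the context. (1) Suppose $\mathbb H\cap\mathbb H_0^{\mathrm{obs}}\ne\emptyset$, take $h_0\in\mathbb H\cap\mathbb H_0^{\mathrm{obs}}$, and assume $P_z(\mathbb H-h_0)\subseteq\mathbb Q'$ and $\mathbb Q'$ is symmetric. Then $$\|P_z(\hat h-h_0)\|_2\le2\sqrt{\sup_{q\in\mathbb Q',h\in\mathbb H}|(\mathbb E-\mathbb E_n)[(Y-h)q]|}.$$ (2) Suppose $\mathbb Q\cap\mathbb Q_0^{\mathrm{obs}}\ne\emptyset$, take $q_0\in\mathbb Q\cap\mathbb Q_0^{\mathrm{obs}}$, and assume $\pi P_w(\mathbb Q-q_0)\subseteq\mathbb H'$ and $\mathbb H'$ is symmetric. Then $$\|\pi P_w(\hat q-q_0)\|_2\le2\sqrt{\sup_{q\in\mathbb Q,h\in\mathbb H'}|(\mathbb E-\mathbb E_n)[-q\pi h+\mathcal T h]|}.$$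
   Context: Setup: random variables $(U,X,A,Z,W,Y)$ with $X$ observed covariates, $A\in\mathcal A$ an action ($\mathcal A$ carries a base measure $\mu$), $Z$ a negative control action, $W$ a negative control outcome, $Y$ real outcome, $U$ an unobserved confounder; the data are $n$ i.i.d. copies of $O=(Y,W,Z,A,X)$; $\mathbb E$ is population expectation, $\mathbb E_n$ the empirical average, $\|\cdot\|_2$ the population $L_2$ norm. Potential outcomes $Y(a),Y(a,z),W(a,z)$. $\pi(a\mid x)$ is a given real contrast function. $f(a\mid u,x)$, $f(a\mid w,x)$ are the conditional densities w.r.t. $\mu$ of $A$ given $(U,X)$ and given $(W,X)$. Assumption (NC): (i) $Y=Y(A,Z)$, $W=W(A,Z)$; (ii) $Y(a,z)=Y(a)$; (iii) $W(a,z)=W$; (iv) $(Z,A)\perp(Y(a),W)\mid(U,X)$ for all $a$; (v) $|\pi(a\mid x)/f(a\mid x,u)|<\infty$ for all $a,x,u$. Bridge sets: $\mathbb H_0=\{h\in L_2(W,A,X):\mathbb E[Y-h\mid A,U,X]=0\}$, $\mathbb Q_0=\{q:\pi q\in L_2(Z,A,X),\ \mathbb E[\pi(A\mid X)(q(Z,A,X)-1/f(A\mid U,X))\mid A,U,X]=0\}$ with $(\pi q)(z,a,x)=\pi(a\mid x)q(z,a,x)$; observed bridge sets $\mathbb H_0^{\mathrm{obs}}=\{h\in L_2(W,A,X):\mathbb E[Y-h(W,A,X)\mid Z,A,X]=0\}$, $\mathbb Q_0^{\mathrm{obs}}=\{q:\pi q\in L_2(Z,A,X),\ \mathbb E[\pi(A\mid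 X)(q(Z,A,X)-1/f(A\mid W,X))\mid W,A,X]=0\}$. Assumption (B): $\mathbb H_0\ne\emptyset$, $\mathbb Q_0\ne\emptyset$. $(\mathcal T h)(w,x)=\int h(w,a,x)\pi(a\mid x)d\mu(a)$. $P_z h=\mathbb E[h(W,A,X)\mid Z,A,X]$, $P_w q=\mathbb E[q(Z,A,X)\mid W,A,X]$, $\pi P_w(q-q_0):=P_w(\pi q-\pi q_0)$; $P_z(\mathbb H-h_0)=\{P_z(h-h_0):h\in\mathbb H\}$, $\pi P_w(\mathbb Q-q_0)=\{\pi P_w(q-q_0):q\in\mathbb Q\}$. A set $S$ is symmetric if $-s\in S$ whenever $s\in S$. Estimators: $\hat h\in\operatorname{argmin}_{h\in\mathbb H}\max_{q\in\mathbb Q'}(\mathbb E_n[q(Z,A,X)(h(W,A,X)-Y)])^2$, $\hat q\in\operatorname{argmin}_{q\in\mathbb Q}\max_{h\in\mathbb H'}(\mathbb E_n[\pi(A\mid X)q(Z,A,X)h(W,A,X)-(\mathcal T h)(W,X)])^2$ (optimizers assumed to exist); $q\pi h$ denotes $\pi(A\mid X)q(Z,A,X)h(W,A,X)$. *)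

theory Defs
  imports "HOL-Probability.Probability"
begin

definition gen :: "'o measure \<Rightarrow> 'v measure \<Rightarrow> ('o \<Rightarrow> 'v) \<Rightarrow> 'o measure" where
  "gen M N V = vimage_algebra (space M) V N"

definition condE :: "'o measure \<Rightarrow> 'v measure \<Rightarrow> ('o \<Rightarrow> 'v) \<Rightarrow> ('o \<Rightarrow> real) \<Rightarrow> 'o \<Rightarrow> real" where
  "condE M N V f = real_cond_exp M (gen M N V) f"

definition L2fun :: "'o measure \<Rightarrow> 'v measure \<Rightarrow> ('o \<Rightarrow> 'v) \<Rightarrow> ('v \<Rightarrow> real) \<Rightarrow> bool" where
  "L2fun M N V g \<longleftrightarrow> g \<in> borel_measurable N \<and> integrable M (\<lambda>\<omega>. (g (V \<omega>))\<^sup>2)"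

definition l2norm :: "'o measure \<Rightarrow> ('o \<Rightarrow> real) \<Rightarrow> real" where
  "l2norm M g = sqrt (\<integral>\<omega>. (g \<omega>)\<^sup>2 \<partial>M)"

definition cond_indep :: "'o measure \<Rightarrow> 'o measure \<Rightarrow> 'o measure \<Rightarrow> 'o measure \<Rightarrow> bool" where
  "cond_indep M F1 F2 G \<longleftrightarrow>
     (\<forall>E1\<in>sets F1. \<forall>E2\<in>sets F2. AE \<omega> in M.
        real_cond_exp M G (indicator (E1 \<inter> E2)) \<omega>
          = real_cond_exp M G (indicator E1) \<omega> * real_cond_exp M G (indicator E2) \<omega>)"

definition cond_density :: "'o measure \<Rightarrow> 'a measure \<Rightarrow> ('o \<Rightarrow> 'a) \<Rightarrow> 'v measure \<Rightarrow> ('o \<Rightarrow> 'v)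
     \<Rightarrow> ('a \<Rightarrow> 'v \<Rightarrow> real) \<Rightarrow> bool" where
  "cond_density M \<mu> A N V f \<longleftrightarrow>
     (\<lambda>(a, v). f a v) \<in> borel_measurable (\<mu> \<Otimes>\<^sub>M N) \<and> (\<forall>a v. 0 \<le> f a v) \<and>
     (\<forall>B\<in>sets \<mu>. AE \<omega> in M.
        condE M N V (indicator (A -` B \<inter> space M)) \<omega> = (LINT a:B|\<mu>. f a (V \<omega>)))"

definition emp_mean :: "'d list \<Rightarrow> ('d \<Rightarrow> real) \<Rightarrow> real" where
  "emp_mean D g = (\<Sum>d\<leftarrow>D. g d) / real (length D)"

definition Top :: "'a measure \<Rightarrow> ('a \<Rightarrow> 'x \<Rightarrow> real) \<Rightarrow> ('w \<Rightarrow> 'a \<Rightarrow> 'x \<Rightarrow> real) \<Rightarrow> 'w \<Rightarrow> 'x \<Rightarrow> real" where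
  "Top \<mu> \<pi> h w x = (\<integral>a. h w a x * \<pi> a x \<partial>\<mu>)"

definition H0 :: "'o measure \<Rightarrow> 'w measure \<Rightarrow> 'a measure \<Rightarrow> 'u measure \<Rightarrow> 'x measure
   \<Rightarrow> ('o \<Rightarrow> real) \<Rightarrow> ('o \<Rightarrow> 'w) \<Rightarrow> ('o \<Rightarrow> 'a) \<Rightarrow> ('o \<Rightarrow> 'u) \<Rightarrow> ('o \<Rightarrow> 'x)
   \<Rightarrow> ('w \<Rightarrow> 'a \<Rightarrow> 'x \<Rightarrow> real) set" where
  "H0 M MW \<mu> MU MX Y W A U X = {h.
     L2fun M (MW \<Otimes>\<^sub>M \<mu> \<Otimes>\<^sub>M MX) (\<lambda>\<omega>. (W \<omega>, A \<omega>, X \<omega>)) (\<lambda>(w, a, x). h w a x) \<and>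
     (AE \<omega> in M. condE M (\<mu> \<Otimes>\<^sub>M MU \<Otimes>\<^sub>M MX) (\<lambda>\<omega>. (A \<omega>, U \<omega>, X \<omega>))
        (\<lambda>\<omega>. Y \<omega> - h (W \<omega>) (A \<omega>) (X \<omega>)) \<omega> = 0)}"

definition Q0 :: "'o measure \<Rightarrow> 'z measure \<Rightarrow> 'a measure \<Rightarrow> 'u measure \<Rightarrow> 'x measure
   \<Rightarrow> ('a \<Rightarrow> 'x \<Rightarrow> real) \<Rightarrow> ('a \<Rightarrow> 'u \<times> 'x \<Rightarrow> real)
   \<Rightarrow> ('o \<Rightarrow> 'z) \<Rightarrow> ('o \<Rightarrow> 'a) \<Rightarrow> ('o \<Rightarrow> 'u) \<Rightarrow> ('o \<Rightarrow> 'x)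
   \<Rightarrow> ('z \<Rightarrow> 'a \<Rightarrow> 'x \<Rightarrow> real) set" where
  "Q0 M MZ \<mu> MU MX \<pi> fU Z A U X = {q.
     L2fun M (MZ \<Otimes>\<^sub>M \<mu> \<Otimes>\<^sub>M MX) (\<lambda>\<omega>. (Z \<omega>, A \<omega>, X \<omega>)) (\<lambda>(z, a, x). \<pi> a x * q z a x) \<and>
     (AE \<omega> in M. condE M (\<mu> \<Otimes>\<^sub>M MU \<Otimes>\<^sub>M MX) (\<lambda>\<omega>. (A \<omega>, U \<omega>, X \<omega>))
        (\<lambda>\<omega>. \<pi> (A \<omega>) (X \<omega>) * (q (Z \<omega>) (A \<omega>) (X \<omega>) - 1 / fU (A \<omega>) (U \<omega>, X \<omega>))) \<omega> = 0)}"

definition H0obs :: "'o measure \<Rightarrow> 'w measure \<Rightarrow> 'z measure \<Rightarrow> 'a measure \<Rightarrow> 'x measure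
   \<Rightarrow> ('o \<Rightarrow> real) \<Rightarrow> ('o \<Rightarrow> 'w) \<Rightarrow> ('o \<Rightarrow> 'z) \<Rightarrow> ('o \<Rightarrow> 'a) \<Rightarrow> ('o \<Rightarrow> 'x)
   \<Rightarrow> ('w \<Rightarrow> 'a \<Rightarrow> 'x \<Rightarrow> real) set" where
  "H0obs M MW MZ \<mu> MX Y W Z A X = {h.
     L2fun M (MW \<Otimes>\<^sub>M \<mu> \<Otimes>\<^sub>M MX) (\<lambda>\<omega>. (W \<omega>, A \<omega>, X \<omega>)) (\<lambda>(w, a, x). h w a x) \<and>
     (AE \<omega> in M. condE M (MZ \<Otimes>\<^sub>M \<mu> \<Otimes>\<^sub>M MX) (\<lambda>\<omega>. (Z \<omega>, A \<omega>, X \<omega>))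
        (\<lambda>\<omega>. Y \<omega> - h (W \<omega>) (A \<omega>) (X \<omega>)) \<omega> = 0)}"

definition Q0obs :: "'o measure \<Rightarrow> 'w measure \<Rightarrow> 'z measure \<Rightarrow> 'a measure \<Rightarrow> 'x measure
   \<Rightarrow> ('a \<Rightarrow> 'x \<Rightarrow> real) \<Rightarrow> ('a \<Rightarrow> 'w \<times> 'x \<Rightarrow> real)
   \<Rightarrow> ('o \<Rightarrow> 'w) \<Rightarrow> ('o \<Rightarrow> 'z) \<Rightarrow> ('o \<Rightarrow> 'a) \<Rightarrow> ('o \<Rightarrow> 'x)
   \<Rightarrow> ('z \<Rightarrow> 'a \<Rightarrow> 'x \<Rightarrow> real) set" where
  "Q0obs M MW MZ \<mu> MX \<pi> fW W Z A X = {q.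
     L2fun M (MZ \<Otimes>\<^sub>M \<mu> \<Otimes>\<^sub>M MX) (\<lambda>\<omega>. (Z \<omega>, A \<omega>, X \<omega>)) (\<lambda>(z, a, x). \<pi> a x * q z a x) \<and>
     (AE \<omega> in M. condE M (MW \<Otimes>\<^sub>M \<mu> \<Otimes>\<^sub>M MX) (\<lambda>\<omega>. (W \<omega>, A \<omega>, X \<omega>))
        (\<lambda>\<omega>. \<pi> (A \<omega>) (X \<omega>) * (q (Z \<omega>) (A \<omega>) (X \<omega>) - 1 / fW (A \<omega>) (W \<omega>, X \<omega>))) \<omega> = 0)}"

end

theory Submission
  imports Defs
begin

lemma gen_subalg:
  assumes M: "prob_space M" and V: "V \<in> M \<rightarrow>\<^sub>M N"
  shows "sigma_finite_subalgebra M (gen M N V)"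
proof -
  interpret prob_space M by fact
  have "subalgebra M (gen M N V)"
    unfolding subalgebra_def gen_def
    using sets_image_in_sets[OF refl V] by simp
  then have "finite_measure_subalgebra M (gen M N V)"
    by (simp add: finite_measure_subalgebra_def finite_measure_subalgebra_axioms_def finite_measure_axioms)
  then show ?thesis by (rule finite_measure_subalgebra_is_sigma_finite)
qed

lemma gen_meas:
  assumes V: "V \<in> M \<rightarrow>\<^sub>M N" and g: "g \<in> borel_measurable N"
  shows "(\<lambda>\<omega>. g (V \<omega>)) \<in> borel_measurable (gen M N V)"
proof -
  have "V \<in> gen M N V \<rightarrow>\<^sub>M N" unfolding gen_def
    by (rule measurable_vimage_algebra1) (use V in \<open>auto dest: measurable_space\<close>)
  then show ?thesis using g by (rule measurable_compose)
qed

lemma integrable_L2_mult: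
  fixes f g :: "'o \<Rightarrow> real"
  assumes "f \<in> borel_measurable M" "g \<in> borel_measurable M"
    "integrable M (\<lambda>x. (f x)\<^sup>2)" "integrable M (\<lambda>x. (g x)\<^sup>2)"
  shows "integrable M (\<lambda>x. f x * g x)"
proof -
  have i: "integrable M (\<lambda>x. (f x)\<^sup>2 + (g x)\<^sup>2)" using assms by auto
  have b: "\<And>x. norm (f x * g x) \<le> norm ((f x)\<^sup>2 + (g x)\<^sup>2)"
  proof -
    fix x
    have "0 \<le> (\<bar>f x\<bar> - \<bar>g x\<bar>)\<^sup>2" by simp
    then have "2 * (\<bar>f x\<bar> * \<bar>g x\<bar>) \<le> (f x)\<^sup>2 + (g x)\<^sup>2"
      by (simp add: power2_diff power2_abs)
    moreover have "0 \<le> \<bar>f x\<bar> * \<bar>g x\<bar>" by simp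
    ultimately have "\<bar>f x * g x\<bar> \<le> (f x)\<^sup>2 + (g x)\<^sup>2"
      unfolding abs_mult by linarith
    then show "norm (f x * g x) \<le> norm ((f x)\<^sup>2 + (g x)\<^sup>2)" by simp
  qed
  show ?thesis
    by (rule Bochner_Integration.integrable_bound[OF i]) (use assms b in auto)
qed

lemma core_ineq:
  fixes e n m :: "'s \<Rightarrow> 't \<Rightarrow> real" and Sset :: "real set"
  assumes bdd: "bdd_above Sset"
    and inS: "\<And>s t. s \<in> S \<Longrightarrow> t \<in> T \<Longrightarrow> \<bar>e s t - n s t\<bar> \<in> Sset"
    and tz: "tz \<in> T" and tt: "tt \<in> T" and ss: "ss \<in> S"
    and e0: "\<And>s. s \<in> S \<Longrightarrow> e s tz = 0"
    and mn: "\<And>s t. s \<in> S \<Longrightarrow> m s t = - n s t"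
    and opt: "(SUP s\<in>S. ereal ((m s tt)\<^sup>2)) \<le> (SUP s\<in>S. ereal ((m s tz)\<^sup>2))"
  shows "- e ss tt \<le> 2 * Sup Sset \<and> 0 \<le> Sup Sset"
proof -
  define \<delta> where "\<delta> = Sup Sset"
  have le: "\<bar>e s t - n s t\<bar> \<le> \<delta>" if "s \<in> S" "t \<in> T" for s t
    unfolding \<delta>_def by (rule cSup_upper[OF inS[OF that] bdd])
  have d0: "0 \<le> \<delta>" using le[OF ss tt] by linarith
  have "(m s tz)\<^sup>2 \<le> \<delta>\<^sup>2" if "s \<in> S" for s
  proof -
    have "\<bar>m s tz\<bar> \<le> \<delta>" using le[OF that tz] e0[OF that] mn[OF that] by simp
    then have "\<bar>m s tz\<bar>\<^sup>2 \<le> \<delta>\<^sup>2" by (rule power_mono) simp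
    then show ?thesis by simp
  qed
  then have "(SUP s\<in>S. ereal ((m s tz)\<^sup>2)) \<le> ereal (\<delta>\<^sup>2)"
    by (intro SUP_least) simp
  moreover have "ereal ((m ss tt)\<^sup>2) \<le> (SUP s\<in>S. ereal ((m s tt)\<^sup>2))"
    using ss by (rule SUP_upper)
  ultimately have "(m ss tt)\<^sup>2 \<le> \<delta>\<^sup>2" using opt by (meson ereal_less_eq(3) order_trans)
  then have "\<bar>m ss tt\<bar>\<^sup>2 \<le> \<delta>\<^sup>2" by simp
  then have "\<bar>m ss tt\<bar> \<le> \<delta>" using d0 by (rule power2_le_imp_le)
  then have "\<bar>n ss tt\<bar> \<le> \<delta>" using mn[OF ss] by simp
  moreover have "\<bar>e ss tt - n ss tt\<bar> \<le> \<delta>" by (rule le[OF ss tt])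
  ultimately show ?thesis using d0 unfolding \<delta>_def[symmetric] by linarith
qed

lemma emp_mean_neg:
  assumes "\<And>d. f d = - g d"
  shows "emp_mean D f = - emp_mean D g"
proof -
  have "(\<Sum>d\<leftarrow>D. f d) = - (\<Sum>d\<leftarrow>D. g d)"
    using assms by (induction D) auto
  then show ?thesis unfolding emp_mean_def by simp
qed

lemma sqrt_two_bound:
  fixes x \<delta> :: real
  assumes "x \<le> 2 * \<delta>" "0 \<le> \<delta>"
  shows "sqrt x \<le> 2 * sqrt \<delta>"
proof -
  have "sqrt x \<le> sqrt (4 * \<delta>)" using assms by simp
  also have "sqrt (4 * \<delta>) = 2 * sqrt \<delta>" by (simp add: real_sqrt_mult)
  finally show ?thesis .
qed

lemma part1:
  fixes M :: "'o measure" and \<mu> :: "'a measure"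
    and MW :: "'w measure" and MZ :: "'z measure" and MX :: "'x measure"
    and Y :: "'o \<Rightarrow> real" and W :: "'o \<Rightarrow> 'w" and Z :: "'o \<Rightarrow> 'z" and A :: "'o \<Rightarrow> 'a"
    and X :: "'o \<Rightarrow> 'x"
    and D :: "(real \<times> 'w \<times> 'z \<times> 'a \<times> 'x) list"
    and HH :: "('w \<Rightarrow> 'a \<Rightarrow> 'x \<Rightarrow> real) set"
    and QQ' :: "('z \<Rightarrow> 'a \<Rightarrow> 'x \<Rightarrow> real) set"
    and hhat :: "'w \<Rightarrow> 'a \<Rightarrow> 'x \<Rightarrow> real"
  assumes M: "prob_space M"
    and measY: "Y \<in> borel_measurable M" and measW: "W \<in> M \<rightarrow>\<^sub>M MW"
    and measZ: "Z \<in> M \<rightarrow>\<^sub>M MZ" and measA: "A \<in> M \<rightarrow>\<^sub>M \<mu>"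
    and measX: "X \<in> M \<rightarrow>\<^sub>M MX"
    and Y_L2: "integrable M (\<lambda>\<omega>. (Y \<omega>)\<^sup>2)"
    and HH_L2: "\<forall>h\<in>HH. L2fun M (MW \<Otimes>\<^sub>M \<mu> \<Otimes>\<^sub>M MX) (\<lambda>\<omega>. (W \<omega>, A \<omega>, X \<omega>)) (\<lambda>(w, a, x). h w a x)"
    and QQ'_L2: "\<forall>q\<in>QQ'. L2fun M (MZ \<Otimes>\<^sub>M \<mu> \<Otimes>\<^sub>M MX) (\<lambda>\<omega>. (Z \<omega>, A \<omega>, X \<omega>)) (\<lambda>(z, a, x). q z a x)"
    and hhat: "hhat \<in> HH \<and> (\<forall>h\<in>HH.
       (SUP q\<in>QQ'. ereal ((emp_mean D (\<lambda>(y, w, z, a, x). q z a x * (hhat w a x - y)))\<^sup>2))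
         \<le> (SUP q\<in>QQ'. ereal ((emp_mean D (\<lambda>(y, w, z, a, x). q z a x * (h w a x - y)))\<^sup>2)))"
    and h0: "h0 \<in> HH \<inter> H0obs M MW MZ \<mu> MX Y W Z A X"
    and proj: "\<forall>h\<in>HH. \<exists>q\<in>QQ'. AE \<omega> in M. q (Z \<omega>) (A \<omega>) (X \<omega>) =
            condE M (MZ \<Otimes>\<^sub>M \<mu> \<Otimes>\<^sub>M MX) (\<lambda>\<omega>. (Z \<omega>, A \<omega>, X \<omega>))
              (\<lambda>\<omega>. h (W \<omega>) (A \<omega>) (X \<omega>) - h0 (W \<omega>) (A \<omega>) (X \<omega>)) \<omega>"
    and bdd: "bdd_above {\<bar>(\<integral>\<omega>. (Y \<omega> - h (W \<omega>) (A \<omega>) (X \<omega>)) * q (Z \<omega>) (A \<omega>) (X \<omega>) \<partial>M)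
                   - emp_mean D (\<lambda>(y, w, z, a, x). (y - h w a x) * q z a x)\<bar> | q h. q \<in> QQ' \<and> h \<in> HH}"
  shows "l2norm M (condE M (MZ \<Otimes>\<^sub>M \<mu> \<Otimes>\<^sub>M MX) (\<lambda>\<omega>. (Z \<omega>, A \<omega>, X \<omega>))
              (\<lambda>\<omega>. hhat (W \<omega>) (A \<omega>) (X \<omega>) - h0 (W \<omega>) (A \<omega>) (X \<omega>)))
         \<le> 2 * sqrt (Sup {\<bar>(\<integral>\<omega>. (Y \<omega> - h (W \<omega>) (A \<omega>) (X \<omega>)) * q (Z \<omega>) (A \<omega>) (X \<omega>) \<partial>M)
                   - emp_mean D (\<lambda>(y, w, z, a, x). (y - h w a x) * q z a x)\<bar> | q h. q \<in> QQ' \<and> h \<in> HH})"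
proof -
  let ?N = "MZ \<Otimes>\<^sub>M \<mu> \<Otimes>\<^sub>M MX"
  let ?V = "\<lambda>\<omega>. (Z \<omega>, A \<omega>, X \<omega>)"
  let ?F = "gen M ?N ?V"
  let ?S = "{\<bar>(\<integral>\<omega>. (Y \<omega> - h (W \<omega>) (A \<omega>) (X \<omega>)) * q (Z \<omega>) (A \<omega>) (X \<omega>) \<partial>M)
                   - emp_mean D (\<lambda>(y, w, z, a, x). (y - h w a x) * q z a x)\<bar> | q h. q \<in> QQ' \<and> h \<in> HH}"
  have measV: "?V \<in> M \<rightarrow>\<^sub>M ?N" using measZ measA measX by measurable
  interpret F: sigma_finite_subalgebra M ?F by (rule gen_subalg[OF M measV])
  interpret P: prob_space M by (rule M)
  define hV where "hV h = (\<lambda>\<omega>. h (W \<omega>) (A \<omega>) (X \<omega>))" for h :: "'w \<Rightarrow> 'a \<Rightarrow> 'x \<Rightarrow> real"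
  define qV where "qV q = (\<lambda>\<omega>. q (Z \<omega>) (A \<omega>) (X \<omega>))" for q :: "'z \<Rightarrow> 'a \<Rightarrow> 'x \<Rightarrow> real"
  have measWAX: "(\<lambda>\<omega>. (W \<omega>, A \<omega>, X \<omega>)) \<in> M \<rightarrow>\<^sub>M MW \<Otimes>\<^sub>M \<mu> \<Otimes>\<^sub>M MX"
    using measW measA measX by measurable
  have hL: "hV h \<in> borel_measurable M \<and> integrable M (\<lambda>\<omega>. (hV h \<omega>)\<^sup>2)" if "h \<in> HH" for h
  proof -
    have L: "L2fun M (MW \<Otimes>\<^sub>M \<mu> \<Otimes>\<^sub>M MX) (\<lambda>\<omega>. (W \<omega>, A \<omega>, X \<omega>)) (\<lambda>(w, a, x). h w a x)"
      using HH_L2 that by blast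
    have "(\<lambda>\<omega>. (\<lambda>(w, a, x). h w a x) (W \<omega>, A \<omega>, X \<omega>)) \<in> borel_measurable M"
      using measurable_compose[OF measWAX] L unfolding L2fun_def by blast
    then show ?thesis using L unfolding L2fun_def hV_def by simp
  qed
  have qL: "qV q \<in> borel_measurable ?F \<and> qV q \<in> borel_measurable M \<and> integrable M (\<lambda>\<omega>. (qV q \<omega>)\<^sup>2)"
    if "q \<in> QQ'" for q
  proof -
    have L: "L2fun M ?N ?V (\<lambda>(z, a, x). q z a x)"
      using QQ'_L2 that by blast
    have "(\<lambda>\<omega>. (\<lambda>(z, a, x). q z a x) (?V \<omega>)) \<in> borel_measurable ?F"
      using gen_meas[OF measV] L unfolding L2fun_def by blast
    then have 1: "qV q \<in> borel_measurable ?F" unfolding qV_def by simp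
    then have "qV q \<in> borel_measurable M" by (rule measurable_from_subalg[OF F.subalg])
    then show ?thesis using 1 L unfolding L2fun_def qV_def by simp
  qed
  have h0HH: "h0 \<in> HH" using h0 by blast
  have h0obs: "AE \<omega> in M. real_cond_exp M ?F (\<lambda>\<omega>. Y \<omega> - hV h0 \<omega>) \<omega> = 0"
    using h0 unfolding H0obs_def condE_def hV_def by blast
  have intqh: "integrable M (\<lambda>\<omega>. qV q \<omega> * hV h \<omega>)" if "q \<in> QQ'" "h \<in> HH" for q h
    using integrable_L2_mult[of "qV q" M "hV h"] qL[OF that(1)] hL[OF that(2)] by blast
  have intqY: "integrable M (\<lambda>\<omega>. qV q \<omega> * Y \<omega>)" if "q \<in> QQ'" for q
    using integrable_L2_mult[of "qV q" M Y] qL[OF that(1)] measY Y_L2 by blast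
  define e where "e q h = (\<integral>\<omega>. (Y \<omega> - h (W \<omega>) (A \<omega>) (X \<omega>)) * q (Z \<omega>) (A \<omega>) (X \<omega>) \<partial>M)" for q h
  define n where "n q h = emp_mean D (\<lambda>(y, w, z, a, x). (y - h w a x) * q z a x)" for q h
  define m where "m q h = emp_mean D (\<lambda>(y, w, z, a, x). q z a x * (h w a x - y))" for q h
  have e_eq: "e q h = (\<integral>\<omega>. qV q \<omega> * Y \<omega> \<partial>M) - (\<integral>\<omega>. qV q \<omega> * hV h \<omega> \<partial>M)"
    if "q \<in> QQ'" "h \<in> HH" for q h
  proof -
    have "e q h = (\<integral>\<omega>. qV q \<omega> * Y \<omega> - qV q \<omega> * hV h \<omega> \<partial>M)"
      unfolding e_def qV_def hV_def by (rule Bochner_Integration.integral_cong) (auto simp: algebra_simps)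
    also have "\<dots> = (\<integral>\<omega>. qV q \<omega> * Y \<omega> \<partial>M) - (\<integral>\<omega>. qV q \<omega> * hV h \<omega> \<partial>M)"
      by (rule Bochner_Integration.integral_diff[OF intqY[OF that(1)] intqh[OF that]])
    finally show ?thesis .
  qed
  have e0: "e q h0 = 0" if "q \<in> QQ'" for q
  proof -
    have int: "integrable M (\<lambda>\<omega>. qV q \<omega> * (Y \<omega> - hV h0 \<omega>))"
      using Bochner_Integration.integrable_diff[OF intqY[OF that] intqh[OF that h0HH]]
      by (simp add: algebra_simps)
    have "e q h0 = (\<integral>\<omega>. qV q \<omega> * (Y \<omega> - hV h0 \<omega>) \<partial>M)"
      unfolding e_def qV_def hV_def by (rule Bochner_Integration.integral_cong) (auto simp: algebra_simps)
    also have "\<dots> = (\<integral>\<omega>. qV q \<omega> * real_cond_exp M ?F (\<lambda>\<omega>. Y \<omega> - hV h0 \<omega>) \<omega> \<partial>M)"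
      by (rule F.real_cond_exp_intg(2)[symmetric]) (use int qL[OF that] hL[OF h0HH] measY in auto)
    also have "\<dots> = (\<integral>\<omega>. 0 \<partial>M)"
      by (rule integral_cong_AE) (use qL[OF that] h0obs in auto)
    finally show ?thesis by simp
  qed
  have mn: "m q h = - n q h" for q h
    unfolding m_def n_def by (rule emp_mean_neg) (auto simp: algebra_simps)
  obtain qs where qs: "qs \<in> QQ'" and qsAE: "AE \<omega> in M. qV qs \<omega> =
      real_cond_exp M ?F (\<lambda>\<omega>. hV hhat \<omega> - hV h0 \<omega>) \<omega>"
    using proj hhat unfolding condE_def qV_def hV_def by blast
  have hhHH: "hhat \<in> HH" using hhat by blast
  have inS: "\<bar>e s t - n s t\<bar> \<in> ?S" if "s \<in> QQ'" "t \<in> HH" for s t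
    unfolding e_def n_def using that by blast
  have opt: "(SUP s\<in>QQ'. ereal ((m s hhat)\<^sup>2)) \<le> (SUP s\<in>QQ'. ereal ((m s h0)\<^sup>2))"
    unfolding m_def using hhat h0HH by blast
  have core: "- e qs hhat \<le> 2 * Sup ?S \<and> 0 \<le> Sup ?S"
    by (rule core_ineq[where S=QQ' and T=HH and n=n and m=m, OF bdd inS h0HH hhHH qs e0 mn opt])
  define g where "g = real_cond_exp M ?F (\<lambda>\<omega>. hV hhat \<omega> - hV h0 \<omega>)"
  have gm: "g \<in> borel_measurable M" unfolding g_def by simp
  have intd: "integrable M (\<lambda>\<omega>. qV qs \<omega> * (hV hhat \<omega> - hV h0 \<omega>))"
    using Bochner_Integration.integrable_diff[OF intqh[OF qs hhHH] intqh[OF qs h0HH]]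
    by (simp add: algebra_simps)
  have "(\<integral>\<omega>. (g \<omega>)\<^sup>2 \<partial>M) = (\<integral>\<omega>. qV qs \<omega> * g \<omega> \<partial>M)"
    by (rule integral_cong_AE) (use gm qL[OF qs] qsAE in \<open>auto simp: g_def power2_eq_square\<close>)
  also have "\<dots> = (\<integral>\<omega>. qV qs \<omega> * (hV hhat \<omega> - hV h0 \<omega>) \<partial>M)"
    unfolding g_def
    by (rule F.real_cond_exp_intg(2)) (use intd qL[OF qs] hL[OF h0HH] hL[OF hhHH] in auto)
  also have "\<dots> = (\<integral>\<omega>. qV qs \<omega> * hV hhat \<omega> \<partial>M) - (\<integral>\<omega>. qV qs \<omega> * hV h0 \<omega> \<partial>M)"
    using Bochner_Integration.integral_diff[OF intqh[OF qs hhHH] intqh[OF qs h0HH]]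
    by (simp add: algebra_simps)
  also have "\<dots> = - e qs hhat + e qs h0"
    using e_eq[OF qs hhHH] e_eq[OF qs h0HH] by simp
  also have "\<dots> = - e qs hhat" using e0[OF qs] by simp
  finally have G: "(\<integral>\<omega>. (g \<omega>)\<^sup>2 \<partial>M) \<le> 2 * Sup ?S" using core by linarith
  have "l2norm M g \<le> 2 * sqrt (Sup ?S)"
    unfolding l2norm_def by (rule sqrt_two_bound[OF G]) (use core in simp)
  then show ?thesis unfolding g_def condE_def hV_def .
qed

lemma pair_measure_eq:
  fixes \<nu> \<nu>' :: "('a \<times> 'b) measure"
  assumes s1: "sets \<nu> = sets (Ma \<Otimes>\<^sub>M Mb)" and s2: "sets \<nu>' = sets (Ma \<Otimes>\<^sub>M Mb)"
    and fin: "emeasure \<nu> (space Ma \<times> space Mb) \<noteq> \<infinity>"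
    and eq: "\<And>B E. B \<in> sets Ma \<Longrightarrow> E \<in> sets Mb \<Longrightarrow> emeasure \<nu> (B \<times> E) = emeasure \<nu>' (B \<times> E)"
  shows "\<nu> = \<nu>'"
proof -
  let ?E = "{a \<times> b |a b. a \<in> sets Ma \<and> b \<in> sets Mb}"
  show ?thesis
  proof (rule measure_eqI_generator_eq[OF Int_stable_pair_measure_generator[of Ma Mb],
        where \<Omega>="space Ma \<times> space Mb" and A="\<lambda>i. space Ma \<times> space Mb"])
    show "?E \<subseteq> Pow (space Ma \<times> space Mb)"
      using sets.space_closed[of Ma] sets.space_closed[of Mb] by auto
    show "sets \<nu> = sigma_sets (space Ma \<times> space Mb) ?E"
      using s1 by (simp add: sets_pair_measure)
    show "sets \<nu>' = sigma_sets (space Ma \<times> space Mb) ?E"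
      using s2 by (simp add: sets_pair_measure)
    show "range (\<lambda>i. space Ma \<times> space Mb) \<subseteq> ?E" by auto
  qed (use eq fin in auto)
qed

context sigma_finite_subalgebra
begin

lemma cond_exp_loc:
  assumes fin: "finite_measure M"
    and p: "integrable M p" and r[measurable]: "r \<in> borel_measurable F"
    and ae: "AE x in M. real_cond_exp M F (\<lambda>x. p x - r x) x = 0"
  shows "AE x in M. real_cond_exp M F p x = r x"
proof -
  interpret finite_measure M by (rule fin)
  have rM[measurable]: "r \<in> borel_measurable M" by (rule measurable_from_subalg[OF subalg r])
  have pM[measurable]: "p \<in> borel_measurable M" using p by auto
  define t :: "nat \<Rightarrow> 'a \<Rightarrow> real" where "t n = indicator {x \<in> space M. \<bar>r x\<bar> \<le> real n}" for n
  have tF[measurable]: "t n \<in> borel_measurable F" for n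
  proof -
    have "{x \<in> space M. \<bar>r x\<bar> \<le> real n} = {x \<in> space F. \<bar>r x\<bar> \<le> real n}"
      using subalg unfolding subalgebra_def by simp
    also have "\<dots> \<in> sets F" by measurable
    finally show ?thesis unfolding t_def by simp
  qed
  have tM[measurable]: "t n \<in> borel_measurable M" for n by (rule measurable_from_subalg[OF subalg tF])
  have intp: "integrable M (\<lambda>x. t n x * p x)" for n
    by (rule Bochner_Integration.integrable_bound[OF p]) (auto simp: t_def indicator_def)
  have intr: "integrable M (\<lambda>x. t n x * r x)" for n
    by (rule integrable_const_bound[where B="real n"]) (auto simp: t_def indicator_def)
  have "AE x in M. t n x * (real_cond_exp M F p x - r x) = 0" for n
  proof -
    have int2: "integrable M (\<lambda>x. t n x * (p x - r x))"
      using Bochner_Integration.integrable_diff[OF intp intr] by (simp add: algebra_simps)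
    have 1: "AE x in M. real_cond_exp M F (\<lambda>x. t n x * (p x - r x)) x = t n x * real_cond_exp M F (\<lambda>x. p x - r x) x"
      by (rule real_cond_exp_mult) (use int2 in auto)
    have 2: "AE x in M. real_cond_exp M F (\<lambda>x. t n x * p x - t n x * r x) x
        = real_cond_exp M F (\<lambda>x. t n x * p x) x - real_cond_exp M F (\<lambda>x. t n x * r x) x"
      by (rule real_cond_exp_diff[OF intp intr])
    have 3: "AE x in M. real_cond_exp M F (\<lambda>x. t n x * p x) x = t n x * real_cond_exp M F p x"
      by (rule real_cond_exp_mult) (use intp in auto)
    have 4: "AE x in M. real_cond_exp M F (\<lambda>x. t n x * r x) x = t n x * r x"
      by (rule real_cond_exp_F_meas[OF intr]) simp
    have 5: "AE x in M. real_cond_exp M F (\<lambda>x. t n x * (p x - r x)) x = real_cond_exp M F (\<lambda>x. t n x * p x - t n x * r x) x"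
      by (simp add: algebra_simps)
    from 1 2 3 4 5 ae show ?thesis by eventually_elim (simp add: algebra_simps)
  qed
  then have "AE x in M. \<forall>n. t n x * (real_cond_exp M F p x - r x) = 0"
    unfolding AE_all_countable by blast
  then show ?thesis
  proof (rule AE_mp[OF _ AE_I2], intro impI)
    fix x assume x: "x \<in> space M" and h: "\<forall>n. t n x * (real_cond_exp M F p x - r x) = 0"
    obtain n :: nat where "\<bar>r x\<bar> \<le> real n" using real_arch_simple by blast
    then have "t n x = 1" using x by (simp add: t_def)
    then show "real_cond_exp M F p x = r x" using h[rule_format, of n] by simp
  qed
qed

end

lemma cd_basic:
  assumes M: "prob_space M" and mu: "sigma_finite_measure \<mu>"
    and measA: "A \<in> M \<rightarrow>\<^sub>M \<mu>" and measV: "V \<in> M \<rightarrow>\<^sub>M N"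
    and cd: "cond_density M \<mu> A N V f"
  shows "AE \<omega> in M. integrable \<mu> (\<lambda>a. f a (V \<omega>)) \<and> (\<integral>a. f a (V \<omega>) \<partial>\<mu>) = 1"
proof -
  interpret F: sigma_finite_subalgebra M "gen M N V" by (rule gen_subalg[OF M measV])
  interpret P: prob_space M by (rule M)
  have sp: "A -` space \<mu> \<inter> space M = space M" using measA by (auto dest: measurable_space)
  have sF: "space (gen M N V) = space M" by (simp add: gen_def)
  have "indicator (space M) \<in> borel_measurable (gen M N V)"
    by (metis borel_measurable_indicator sets.top sF)
  then have 1: "AE \<omega> in M. condE M N V (indicator (space M)) \<omega> = indicator (space M) \<omega>"
    unfolding condE_def by (intro F.real_cond_exp_F_meas P.integrable_const_bound[where B=1]) auto
  have 2: "AE \<omega> in M. condE M N V (indicator (A -` space \<mu> \<inter> space M)) \<omega> = (LINT a:space \<mu>|\<mu>. f a (V \<omega>))"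
    using cd unfolding cond_density_def by blast
  from 1 2 AE_space show ?thesis
  proof (eventually_elim)
    case (elim \<omega>)
    then have "(LINT a:space \<mu>|\<mu>. f a (V \<omega>)) = 1" using sp by simp
    moreover have "(LINT a:space \<mu>|\<mu>. f a (V \<omega>)) = (\<integral>a. f a (V \<omega>) \<partial>\<mu>)"
      unfolding set_lebesgue_integral_def
      by (rule Bochner_Integration.integral_cong) (auto simp: indicator_def)
    ultimately have I: "(\<integral>a. f a (V \<omega>) \<partial>\<mu>) = 1" by simp
    then have "integrable \<mu> (\<lambda>a. f a (V \<omega>))"
      using not_integrable_integral_eq by fastforce
    with I show ?case by simp
  qed
qed

lemma cd_nn:
  assumes M: "prob_space M" and mu: "sigma_finite_measure \<mu>"
    and measA: "A \<in> M \<rightarrow>\<^sub>M \<mu>" and measV: "V \<in> M \<rightarrow>\<^sub>M N"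
    and cd: "cond_density M \<mu> A N V f" and B: "B \<in> sets \<mu>"
  shows "AE \<omega> in M. 0 \<le> condE M N V (indicator (A -` B \<inter> space M)) \<omega> \<and>
     ennreal (condE M N V (indicator (A -` B \<inter> space M)) \<omega>) = (\<integral>\<^sup>+a. ennreal (indicator B a * f a (V \<omega>)) \<partial>\<mu>)"
proof -
  have 1: "AE \<omega> in M. integrable \<mu> (\<lambda>a. f a (V \<omega>)) \<and> (\<integral>a. f a (V \<omega>) \<partial>\<mu>) = 1"
    by (rule cd_basic[OF assms(1-5)])
  have 2: "AE \<omega> in M. condE M N V (indicator (A -` B \<inter> space M)) \<omega> = (LINT a:B|\<mu>. f a (V \<omega>))"
    using cd B unfolding cond_density_def by blast
  have pos: "\<And>a v. 0 \<le> f a v" using cd unfolding cond_density_def by blast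
  from 1 2 show ?thesis
  proof (eventually_elim)
    case (elim \<omega>)
    have int: "integrable \<mu> (\<lambda>a. indicator B a * f a (V \<omega>))"
      using integrable_mult_indicator[OF B, of "\<lambda>a. f a (V \<omega>)"] elim by simp
    have eq: "(LINT a:B|\<mu>. f a (V \<omega>)) = (\<integral>a. indicator B a * f a (V \<omega>) \<partial>\<mu>)"
      unfolding set_lebesgue_integral_def by simp
    have "(\<integral>\<^sup>+a. ennreal (indicator B a * f a (V \<omega>)) \<partial>\<mu>) = ennreal (\<integral>a. indicator B a * f a (V \<omega>) \<partial>\<mu>)"
      by (rule nn_integral_eq_integral[OF int]) (simp add: pos)
    moreover have "0 \<le> (\<integral>a. indicator B a * f a (V \<omega>) \<partial>\<mu>)"
      by (rule integral_nonneg_AE) (simp add: pos)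
    ultimately show ?case using elim eq by simp
  qed
qed


lemma dens_gen:
  assumes M: "prob_space M" and mu: "sigma_finite_measure \<mu>"
    and measA: "A \<in> M \<rightarrow>\<^sub>M \<mu>" and measV: "V \<in> M \<rightarrow>\<^sub>M N"
    and cd: "cond_density M \<mu> A N V f" and B: "B \<in> sets \<mu>"
    and phi[measurable]: "\<phi> \<in> borel_measurable M" and phib: "\<And>\<omega>. 0 \<le> \<phi> \<omega> \<and> \<phi> \<omega> \<le> 1"
    and hyp: "(\<integral>\<omega>. \<phi> \<omega> * indicator (A -` B \<inter> space M) \<omega> \<partial>M)
       = (\<integral>\<omega>. \<phi> \<omega> * condE M N V (indicator (A -` B \<inter> space M)) \<omega> \<partial>M)"
  shows "(\<integral>\<^sup>+\<omega>. ennreal (\<phi> \<omega> * indicator (A -` B \<inter> space M) \<omega>) \<partial>M)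
       = (\<integral>\<^sup>+\<omega>. ennreal (\<phi> \<omega>) * (\<integral>\<^sup>+a. ennreal (indicator B a * f a (V \<omega>)) \<partial>\<mu>) \<partial>M)"
proof -
  interpret F: sigma_finite_subalgebra M "gen M N V" by (rule gen_subalg[OF M measV])
  interpret P: prob_space M by (rule M)
  define c where "c = condE M N V (indicator (A -` B \<inter> space M))"
  have ABs: "A -` B \<inter> space M \<in> sets M" using measA B by measurable
  have cm[measurable]: "c \<in> borel_measurable M" unfolding c_def condE_def by simp
  have intI: "integrable M (indicator (A -` B \<inter> space M) :: 'a \<Rightarrow> real)"
    by (rule P.integrable_const_bound[where B=1]) (use ABs in auto)
  have ci: "integrable M c" unfolding c_def condE_def by (rule F.real_cond_exp_int(1)[OF intI])
  have AEc: "AE \<omega> in M. 0 \<le> c \<omega> \<and> ennreal (c \<omega>) = (\<integral>\<^sup>+a. ennreal (indicator B a * f a (V \<omega>)) \<partial>\<mu>)"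
    unfolding c_def by (rule cd_nn[OF assms(1-6)])
  have m1: "(\<lambda>\<omega>. \<phi> \<omega> * indicator (A -` B \<inter> space M) \<omega>) \<in> borel_measurable M"
    by (intro borel_measurable_times phi borel_measurable_indicator ABs)
  have int1: "integrable M (\<lambda>\<omega>. \<phi> \<omega> * indicator (A -` B \<inter> space M) \<omega>)"
    by (rule P.integrable_const_bound[where B=1, OF _ m1]) (use phib in \<open>auto simp: indicator_def\<close>)
  have int2: "integrable M (\<lambda>\<omega>. \<phi> \<omega> * c \<omega>)"
  proof (rule Bochner_Integration.integrable_bound[OF ci])
    show "AE x in M. norm (\<phi> x * c x) \<le> norm (c x)"
      using phib by (auto simp: abs_mult intro!: mult_left_le_one_le)
  qed simp
  have "(\<integral>\<^sup>+\<omega>. ennreal (\<phi> \<omega> * indicator (A -` B \<inter> space M) \<omega>) \<partial>M)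
      = ennreal (\<integral>\<omega>. \<phi> \<omega> * indicator (A -` B \<inter> space M) \<omega> \<partial>M)"
    by (rule nn_integral_eq_integral[OF int1]) (use phib in simp)
  also have "\<dots> = ennreal (\<integral>\<omega>. \<phi> \<omega> * c \<omega> \<partial>M)" using hyp c_def by simp
  also have "\<dots> = (\<integral>\<^sup>+\<omega>. ennreal (\<phi> \<omega> * c \<omega>) \<partial>M)"
    by (rule nn_integral_eq_integral[OF int2, symmetric]) (use AEc phib in auto)
  also have "\<dots> = (\<integral>\<^sup>+\<omega>. ennreal (\<phi> \<omega>) * (\<integral>\<^sup>+a. ennreal (indicator B a * f a (V \<omega>)) \<partial>\<mu>) \<partial>M)"
    by (rule nn_integral_cong_AE) (use AEc phib in \<open>auto simp: ennreal_mult\<close>)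
  finally show ?thesis .
qed

lemma emeasure_nuK:
  assumes M: "prob_space M" and mu: "sigma_finite_measure \<mu>"
    and measV[measurable]: "V \<in> M \<rightarrow>\<^sub>M N"
    and k[measurable]: "(\<lambda>(\<omega>, a). k \<omega> a) \<in> borel_measurable (M \<Otimes>\<^sub>M \<mu>)"
    and S[measurable]: "S \<in> sets (\<mu> \<Otimes>\<^sub>M N)"
  shows "emeasure (distr (density (M \<Otimes>\<^sub>M \<mu>) (\<lambda>(\<omega>, a). ennreal (k \<omega> a))) (\<mu> \<Otimes>\<^sub>M N) (\<lambda>(\<omega>, a). (a, V \<omega>))) S
     = (\<integral>\<^sup>+\<omega>. (\<integral>\<^sup>+a. ennreal (k \<omega> a) * indicator S (a, V \<omega>) \<partial>\<mu>) \<partial>M)"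
proof -
  interpret P: prob_space M by (rule M)
  interpret mu: sigma_finite_measure \<mu> by (rule mu)
  interpret PS: pair_sigma_finite M \<mu> by standard
  have mv[measurable]: "(\<lambda>(\<omega>, a). (a, V \<omega>)) \<in> M \<Otimes>\<^sub>M \<mu> \<rightarrow>\<^sub>M \<mu> \<Otimes>\<^sub>M N" by measurable
  have "emeasure (distr (density (M \<Otimes>\<^sub>M \<mu>) (\<lambda>(\<omega>, a). ennreal (k \<omega> a))) (\<mu> \<Otimes>\<^sub>M N) (\<lambda>(\<omega>, a). (a, V \<omega>))) S
     = emeasure (density (M \<Otimes>\<^sub>M \<mu>) (\<lambda>(\<omega>, a). ennreal (k \<omega> a))) ((\<lambda>(\<omega>, a). (a, V \<omega>)) -` S \<inter> space (M \<Otimes>\<^sub>M \<mu>))"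
    using emeasure_distr[of "\<lambda>(\<omega>, a). (a, V \<omega>)" "density (M \<Otimes>\<^sub>M \<mu>) (\<lambda>(\<omega>, a). ennreal (k \<omega> a))" "\<mu> \<Otimes>\<^sub>M N" S] mv by simp
  also have "\<dots> = (\<integral>\<^sup>+p. (\<lambda>(\<omega>, a). ennreal (k \<omega> a)) p * indicator ((\<lambda>(\<omega>, a). (a, V \<omega>)) -` S \<inter> space (M \<Otimes>\<^sub>M \<mu>)) p \<partial>(M \<Otimes>\<^sub>M \<mu>))"
    by (rule emeasure_density) (use mv in auto)
  also have "\<dots> = (\<integral>\<^sup>+p. (\<lambda>(\<omega>, a). ennreal (k \<omega> a) * indicator S (a, V \<omega>)) p \<partial>(M \<Otimes>\<^sub>M \<mu>))"
    by (rule nn_integral_cong) (auto simp: indicator_def split: prod.splits)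
  also have "\<dots> = (\<integral>\<^sup>+\<omega>. (\<integral>\<^sup>+a. ennreal (k \<omega> a) * indicator S (a, V \<omega>) \<partial>\<mu>) \<partial>M)"
  proof -
    have "(\<lambda>(\<omega>, a). ennreal (k \<omega> a) * indicator S (a, V \<omega>)) \<in> borel_measurable (M \<Otimes>\<^sub>M \<mu>)"
      by measurable
    from mu.nn_integral_fst[OF this] show ?thesis by simp
  qed
  finally show ?thesis .
qed


lemma law_eq:
  assumes M: "prob_space M" and mu: "sigma_finite_measure \<mu>"
    and measA[measurable]: "A \<in> M \<rightarrow>\<^sub>M \<mu>" and measV[measurable]: "V \<in> M \<rightarrow>\<^sub>M N"
    and cd: "cond_density M \<mu> A N V f"
  shows "distr M (\<mu> \<Otimes>\<^sub>M N) (\<lambda>\<omega>. (A \<omega>, V \<omega>))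
     = distr (density (M \<Otimes>\<^sub>M \<mu>) (\<lambda>(\<omega>, a). ennreal (f a (V \<omega>)))) (\<mu> \<Otimes>\<^sub>M N) (\<lambda>(\<omega>, a). (a, V \<omega>))"
proof (rule pair_measure_eq[where Ma=\<mu> and Mb=N])
  interpret F: sigma_finite_subalgebra M "gen M N V" by (rule gen_subalg[OF M measV])
  interpret P: prob_space M by (rule M)
  have fm[measurable]: "(\<lambda>(a, v). f a v) \<in> borel_measurable (\<mu> \<Otimes>\<^sub>M N)" using cd unfolding cond_density_def by blast
  have fpos: "\<And>a v. 0 \<le> f a v" using cd unfolding cond_density_def by blast
  have km: "(\<lambda>(\<omega>, a). f a (V \<omega>)) \<in> borel_measurable (M \<Otimes>\<^sub>M \<mu>)"
  proof -
    have "(\<lambda>(\<omega>, a). (a, V \<omega>)) \<in> M \<Otimes>\<^sub>M \<mu> \<rightarrow>\<^sub>M \<mu> \<Otimes>\<^sub>M N" by measurable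
    from measurable_compose[OF this fm] show ?thesis by (simp add: case_prod_beta')
  qed
  interpret D: prob_space "distr M (\<mu> \<Otimes>\<^sub>M N) (\<lambda>\<omega>. (A \<omega>, V \<omega>))"
    by (rule P.prob_space_distr) measurable
  show "emeasure (distr M (\<mu> \<Otimes>\<^sub>M N) (\<lambda>\<omega>. (A \<omega>, V \<omega>))) (space \<mu> \<times> space N) \<noteq> \<infinity>"
    using D.emeasure_finite by simp
  fix B E assume B[measurable]: "B \<in> sets \<mu>" and E[measurable]: "E \<in> sets N"
  have ABs[measurable]: "A -` B \<inter> space M \<in> sets M" by measurable
  have phim: "(\<lambda>\<omega>. indicator E (V \<omega>) :: real) \<in> borel_measurable (gen M N V)"
    using gen_meas[OF measV, of "indicator E"] by simp
  have hyp: "(\<integral>\<omega>. indicator E (V \<omega>) * indicator (A -` B \<inter> space M) \<omega> \<partial>M)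
       = (\<integral>\<omega>. indicator E (V \<omega>) * condE M N V (indicator (A -` B \<inter> space M)) \<omega> \<partial>M)"
    unfolding condE_def
  proof (rule F.real_cond_exp_intg(2)[symmetric])
    show "integrable M (\<lambda>\<omega>. indicator E (V \<omega>) * indicator (A -` B \<inter> space M) \<omega> :: real)"
      by (rule P.integrable_const_bound[where B=1]) (auto simp: indicator_def)
  qed (use phim in auto)
  have "emeasure (distr M (\<mu> \<Otimes>\<^sub>M N) (\<lambda>\<omega>. (A \<omega>, V \<omega>))) (B \<times> E)
      = emeasure M ((\<lambda>\<omega>. (A \<omega>, V \<omega>)) -` (B \<times> E) \<inter> space M)"
    by (rule emeasure_distr) measurable
  also have "\<dots> = (\<integral>\<^sup>+\<omega>. ennreal (indicator E (V \<omega>) * indicator (A -` B \<inter> space M) \<omega>) \<partial>M)"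
  proof -
    have Ss: "(\<lambda>\<omega>. (A \<omega>, V \<omega>)) -` (B \<times> E) \<inter> space M \<in> sets M" by measurable
    show ?thesis
      unfolding nn_integral_indicator[OF Ss, symmetric]
      by (rule nn_integral_cong) (auto simp: indicator_def)
  qed
  also have "\<dots> = (\<integral>\<^sup>+\<omega>. ennreal (indicator E (V \<omega>)) * (\<integral>\<^sup>+a. ennreal (indicator B a * f a (V \<omega>)) \<partial>\<mu>) \<partial>M)"
    by (rule dens_gen[OF M mu measA measV cd B _ _ hyp]) (auto simp: indicator_def)
  also have "\<dots> = (\<integral>\<^sup>+\<omega>. (\<integral>\<^sup>+a. ennreal (f a (V \<omega>)) * indicator (B \<times> E) (a, V \<omega>) \<partial>\<mu>) \<partial>M)"
  proof (rule nn_integral_cong)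
    fix \<omega> assume \<omega>: "\<omega> \<in> space M"
    have Vs: "V \<omega> \<in> space N" by (rule measurable_space[OF measV \<omega>])
    have "(\<integral>\<^sup>+a. ennreal (f a (V \<omega>)) * indicator (B \<times> E) (a, V \<omega>) \<partial>\<mu>)
        = (\<integral>\<^sup>+a. ennreal (indicator E (V \<omega>)) * ennreal (indicator B a * f a (V \<omega>)) \<partial>\<mu>)"
      by (rule nn_integral_cong) (auto simp: indicator_def)
    also have "\<dots> = ennreal (indicator E (V \<omega>)) * (\<integral>\<^sup>+a. ennreal (indicator B a * f a (V \<omega>)) \<partial>\<mu>)"
      by (rule nn_integral_cmult) (use fm Vs in measurable)
    finally show "ennreal (indicator E (V \<omega>)) * (\<integral>\<^sup>+a. ennreal (indicator B a * f a (V \<omega>)) \<partial>\<mu>)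
       = (\<integral>\<^sup>+a. ennreal (f a (V \<omega>)) * indicator (B \<times> E) (a, V \<omega>) \<partial>\<mu>)" by simp
  qed
  also have "\<dots> = emeasure (distr (density (M \<Otimes>\<^sub>M \<mu>) (\<lambda>(\<omega>, a). ennreal (f a (V \<omega>)))) (\<mu> \<Otimes>\<^sub>M N) (\<lambda>(\<omega>, a). (a, V \<omega>))) (B \<times> E)"
    by (rule emeasure_nuK[OF M mu measV km, symmetric]) simp
  finally show "emeasure (distr M (\<mu> \<Otimes>\<^sub>M N) (\<lambda>\<omega>. (A \<omega>, V \<omega>))) (B \<times> E) =
      emeasure (distr (density (M \<Otimes>\<^sub>M \<mu>) (\<lambda>(\<omega>, a). ennreal (f a (V \<omega>)))) (\<mu> \<Otimes>\<^sub>M N) (\<lambda>(\<omega>, a). (a, V \<omega>))) (B \<times> E)" .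
qed simp_all


lemma emeasure_distr_density:
  assumes g[measurable]: "g \<in> borel_measurable M" and V[measurable]: "V \<in> M \<rightarrow>\<^sub>M N"
    and E[measurable]: "E \<in> sets N"
  shows "emeasure (distr (density M g) N V) E = (\<integral>\<^sup>+\<omega>. g \<omega> * indicator E (V \<omega>) \<partial>M)"
proof -
  have "emeasure (distr (density M g) N V) E = emeasure (density M g) (V -` E \<inter> space M)"
    using emeasure_distr[of V "density M g" N E] by simp
  also have "\<dots> = (\<integral>\<^sup>+\<omega>. g \<omega> * indicator (V -` E \<inter> space M) \<omega> \<partial>M)"
    by (rule emeasure_density) measurable
  also have "\<dots> = (\<integral>\<^sup>+\<omega>. g \<omega> * indicator E (V \<omega>) \<partial>M)"
    by (rule nn_integral_cong) (auto simp: indicator_def)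
  finally show ?thesis .
qed

lemma inner_U:
  fixes M :: "'o measure" and \<mu> :: "'a measure"
    and MU :: "'u measure" and MW :: "'w measure" and MZ :: "'z measure" and MX :: "'x measure"
    and W :: "'o \<Rightarrow> 'w" and Z :: "'o \<Rightarrow> 'z" and A :: "'o \<Rightarrow> 'a"
    and X :: "'o \<Rightarrow> 'x" and U :: "'o \<Rightarrow> 'u" and Ya :: "'o \<Rightarrow> real"
    and fU :: "'a \<Rightarrow> 'u \<times> 'x \<Rightarrow> real"
  assumes M: "prob_space M" and mu: "sigma_finite_measure \<mu>"
    and measW[measurable]: "W \<in> M \<rightarrow>\<^sub>M MW"
    and measZ[measurable]: "Z \<in> M \<rightarrow>\<^sub>M MZ" and measA[measurable]: "A \<in> M \<rightarrow>\<^sub>M \<mu>"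
    and measX[measurable]: "X \<in> M \<rightarrow>\<^sub>M MX" and measU[measurable]: "U \<in> M \<rightarrow>\<^sub>M MU"
    and measYa[measurable]: "Ya \<in> borel_measurable M"
    and cd: "cond_density M \<mu> A (MU \<Otimes>\<^sub>M MX) (\<lambda>\<omega>. (U \<omega>, X \<omega>)) fU"
    and CI: "cond_indep M (gen M (MZ \<Otimes>\<^sub>M \<mu>) (\<lambda>\<omega>. (Z \<omega>, A \<omega>)))
                              (gen M (borel \<Otimes>\<^sub>M MW) (\<lambda>\<omega>. (Ya \<omega>, W \<omega>)))
                              (gen M (MU \<Otimes>\<^sub>M MX) (\<lambda>\<omega>. (U \<omega>, X \<omega>)))"
    and B[measurable]: "B \<in> sets \<mu>" and E[measurable]: "E \<in> sets (MW \<Otimes>\<^sub>M MX)"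
  shows "(\<integral>\<^sup>+\<omega>. ennreal (indicator E (W \<omega>, X \<omega>) * indicator (A -` B \<inter> space M) \<omega>) \<partial>M)
     = (\<integral>\<^sup>+\<omega>. ennreal (indicator E (W \<omega>, X \<omega>)) * (\<integral>\<^sup>+a. ennreal (indicator B a * fU a (U \<omega>, X \<omega>)) \<partial>\<mu>) \<partial>M)"
proof -
  interpret P: prob_space M by (rule M)
  interpret mu: sigma_finite_measure \<mu> by (rule mu)
  let ?G = "gen M (MU \<Otimes>\<^sub>M MX) (\<lambda>\<omega>. (U \<omega>, X \<omega>))"
  have measUX[measurable]: "(\<lambda>\<omega>. (U \<omega>, X \<omega>)) \<in> M \<rightarrow>\<^sub>M MU \<Otimes>\<^sub>M MX" by measurable
  interpret G: sigma_finite_subalgebra M ?G by (rule gen_subalg[OF M measUX])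
  have fm[measurable]: "(\<lambda>(a, v). fU a v) \<in> borel_measurable (\<mu> \<Otimes>\<^sub>M (MU \<Otimes>\<^sub>M MX))"
    using cd unfolding cond_density_def by blast
  define K where "K \<omega> = (\<integral>\<^sup>+a. ennreal (indicator B a * fU a (U \<omega>, X \<omega>)) \<partial>\<mu>)" for \<omega>
  have Km[measurable]: "K \<in> borel_measurable M"
  proof -
    have "(\<lambda>(\<omega>, a). ennreal (indicator B a * fU a (U \<omega>, X \<omega>))) \<in> borel_measurable (M \<Otimes>\<^sub>M \<mu>)"
    proof -
      have "(\<lambda>(\<omega>, a). (a, (U \<omega>, X \<omega>))) \<in> M \<Otimes>\<^sub>M \<mu> \<rightarrow>\<^sub>M \<mu> \<Otimes>\<^sub>M (MU \<Otimes>\<^sub>M MX)" by measurable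
      from measurable_compose[OF this fm] have "(\<lambda>(\<omega>, a). fU a (U \<omega>, X \<omega>)) \<in> borel_measurable (M \<Otimes>\<^sub>M \<mu>)"
        by (simp add: case_prod_beta')
      then show ?thesis by measurable
    qed
    then show ?thesis unfolding K_def by measurable
  qed
  have ABs[measurable]: "A -` B \<inter> space M \<in> sets M" by measurable
  define L1 where "L1 = distr (density M (\<lambda>\<omega>. ennreal (indicator (A -` B \<inter> space M) \<omega>))) (MW \<Otimes>\<^sub>M MX) (\<lambda>\<omega>. (W \<omega>, X \<omega>))"
  define L2 where "L2 = distr (density M K) (MW \<Otimes>\<^sub>M MX) (\<lambda>\<omega>. (W \<omega>, X \<omega>))"
  have e1: "emeasure L1 E' = (\<integral>\<^sup>+\<omega>. ennreal (indicator E' (W \<omega>, X \<omega>) * indicator (A -` B \<inter> space M) \<omega>) \<partial>M)"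
    if [measurable]: "E' \<in> sets (MW \<Otimes>\<^sub>M MX)" for E'
    unfolding L1_def
    by (subst emeasure_distr_density) (measurable, auto intro!: nn_integral_cong simp: indicator_def)
  have e2: "emeasure L2 E' = (\<integral>\<^sup>+\<omega>. ennreal (indicator E' (W \<omega>, X \<omega>)) * K \<omega> \<partial>M)"
    if [measurable]: "E' \<in> sets (MW \<Otimes>\<^sub>M MX)" for E'
    unfolding L2_def
    by (subst emeasure_distr_density) (measurable, auto intro!: nn_integral_cong simp: indicator_def)
  have "L1 = L2"
  proof (rule pair_measure_eq[where Ma=MW and Mb=MX])
    show "sets L1 = sets (MW \<Otimes>\<^sub>M MX)" "sets L2 = sets (MW \<Otimes>\<^sub>M MX)" unfolding L1_def L2_def by simp_all
    have "emeasure L1 (space MW \<times> space MX) = (\<integral>\<^sup>+\<omega>. ennreal (indicator (space MW \<times> space MX) (W \<omega>, X \<omega>) * indicator (A -` B \<inter> space M) \<omega>) \<partial>M)"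
      by (rule e1) (simp add: space_pair_measure[symmetric])
    also have "\<dots> \<le> (\<integral>\<^sup>+\<omega>. 1 \<partial>M)"
      by (rule nn_integral_mono) (auto simp: indicator_def)
    also have "\<dots> = 1" by (simp add: P.emeasure_space_1)
    finally show "emeasure L1 (space MW \<times> space MX) \<noteq> \<infinity>" by (auto simp: top_unique)
  next
    fix C D assume C[measurable]: "C \<in> sets MW" and D[measurable]: "D \<in> sets MX"
    define \<phi> :: "'o \<Rightarrow> real" where "\<phi> \<omega> = indicator D (X \<omega>) * indicator C (W \<omega>)" for \<omega>
    have \<phi>m[measurable]: "\<phi> \<in> borel_measurable M" unfolding \<phi>_def by measurable
    define E1 where "E1 = A -` B \<inter> space M"
    define E2 where "E2 = W -` C \<inter> space M"
    have E1s[measurable]: "E1 \<in> sets M" "E2 \<in> sets M" unfolding E1_def E2_def by measurable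
    have E1g: "E1 \<in> sets (gen M (MZ \<Otimes>\<^sub>M \<mu>) (\<lambda>\<omega>. (Z \<omega>, A \<omega>)))"
    proof -
      have "(\<lambda>\<omega>. (Z \<omega>, A \<omega>)) -` (space MZ \<times> B) \<inter> space M = E1"
        unfolding E1_def using measurable_space[OF measZ] by auto
      moreover have "(\<lambda>\<omega>. (Z \<omega>, A \<omega>)) -` (space MZ \<times> B) \<inter> space M \<in> sets (gen M (MZ \<Otimes>\<^sub>M \<mu>) (\<lambda>\<omega>. (Z \<omega>, A \<omega>)))"
        unfolding gen_def by (rule in_vimage_algebra) simp
      ultimately show ?thesis by simp
    qed
    have E2g: "E2 \<in> sets (gen M (borel \<Otimes>\<^sub>M MW) (\<lambda>\<omega>. (Ya \<omega>, W \<omega>)))"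
    proof -
      have "(\<lambda>\<omega>. (Ya \<omega>, W \<omega>)) -` (UNIV \<times> C) \<inter> space M = E2"
        unfolding E2_def by auto
      moreover have "(\<lambda>\<omega>. (Ya \<omega>, W \<omega>)) -` (UNIV \<times> C) \<inter> space M \<in> sets (gen M (borel \<Otimes>\<^sub>M MW) (\<lambda>\<omega>. (Ya \<omega>, W \<omega>)))"
        unfolding gen_def by (rule in_vimage_algebra) (metis C pair_measureI sets.top space_borel)
      ultimately show ?thesis by simp
    qed
    have ci: "AE \<omega> in M. real_cond_exp M ?G (indicator (E1 \<inter> E2)) \<omega>
        = real_cond_exp M ?G (indicator E1) \<omega> * real_cond_exp M ?G (indicator E2) \<omega>"
      using CI E1g E2g unfolding cond_indep_def by blast
    define c1 where "c1 = real_cond_exp M ?G (indicator E1)"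
    define c2 where "c2 = real_cond_exp M ?G (indicator E2)"
    have c1m[measurable]: "c1 \<in> borel_measurable ?G" "c1 \<in> borel_measurable M" unfolding c1_def by simp_all
    have intE1: "integrable M (indicator E1 :: 'o \<Rightarrow> real)"
      by (rule P.integrable_const_bound[where B=1]) auto
    have c1i: "integrable M c1" unfolding c1_def by (rule G.real_cond_exp_int(1)[OF intE1])
    have dG[measurable]: "(\<lambda>\<omega>. indicator D (X \<omega>) :: real) \<in> borel_measurable ?G"
    proof -
      have "(\<lambda>\<omega>. (\<lambda>(u, x). indicator D x :: real) (U \<omega>, X \<omega>)) \<in> borel_measurable ?G"
        by (rule gen_meas[OF measUX]) measurable
      then show ?thesis by simp
    qed
    have dcG: "(\<lambda>\<omega>. indicator D (X \<omega>) * c1 \<omega>) \<in> borel_measurable ?G" using dG c1m by measurable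
    have hyp: "(\<integral>\<omega>. \<phi> \<omega> * indicator (A -` B \<inter> space M) \<omega> \<partial>M)
       = (\<integral>\<omega>. \<phi> \<omega> * condE M (MU \<Otimes>\<^sub>M MX) (\<lambda>\<omega>. (U \<omega>, X \<omega>)) (indicator (A -` B \<inter> space M)) \<omega> \<partial>M)"
    proof -
      have "(\<integral>\<omega>. \<phi> \<omega> * indicator (A -` B \<inter> space M) \<omega> \<partial>M) = (\<integral>\<omega>. indicator D (X \<omega>) * indicator (E1 \<inter> E2) \<omega> \<partial>M)"
        by (rule Bochner_Integration.integral_cong) (auto simp: \<phi>_def E1_def E2_def indicator_def)
      also have "\<dots> = (\<integral>\<omega>. indicator D (X \<omega>) * real_cond_exp M ?G (indicator (E1 \<inter> E2)) \<omega> \<partial>M)"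
      proof (rule G.real_cond_exp_intg(2)[symmetric])
        show "integrable M (\<lambda>\<omega>. indicator D (X \<omega>) * indicator (E1 \<inter> E2) \<omega> :: real)"
          by (rule P.integrable_const_bound[where B=1]) (auto simp: indicator_def)
      qed (use dG in auto)
      also have "\<dots> = (\<integral>\<omega>. (indicator D (X \<omega>) * c1 \<omega>) * c2 \<omega> \<partial>M)"
        by (rule integral_cong_AE) (use ci in \<open>auto simp: c1_def c2_def\<close>)
      also have "\<dots> = (\<integral>\<omega>. (indicator D (X \<omega>) * c1 \<omega>) * indicator E2 \<omega> \<partial>M)"
        unfolding c2_def
      proof (rule G.real_cond_exp_intg(2))
        show "integrable M (\<lambda>\<omega>. indicator D (X \<omega>) * c1 \<omega> * indicator E2 \<omega>)"
          by (rule Bochner_Integration.integrable_bound[OF c1i]) (auto simp: indicator_def)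
      qed (use dcG in auto)
      also have "\<dots> = (\<integral>\<omega>. \<phi> \<omega> * c1 \<omega> \<partial>M)"
        by (rule Bochner_Integration.integral_cong) (auto simp: \<phi>_def E2_def indicator_def)
      finally show ?thesis unfolding c1_def condE_def E1_def .
    qed
    have "emeasure L1 (C \<times> D) = (\<integral>\<^sup>+\<omega>. ennreal (\<phi> \<omega> * indicator (A -` B \<inter> space M) \<omega>) \<partial>M)"
      by (subst e1) (measurable, auto intro!: nn_integral_cong simp: \<phi>_def indicator_def)
    also have "\<dots> = (\<integral>\<^sup>+\<omega>. ennreal (\<phi> \<omega>) * K \<omega> \<partial>M)"
      unfolding K_def
      by (rule dens_gen[OF M mu measA measUX cd B \<phi>m _ hyp]) (auto simp: \<phi>_def indicator_def)
    also have "\<dots> = emeasure L2 (C \<times> D)"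
      by (subst e2) (measurable, auto intro!: nn_integral_cong simp: \<phi>_def indicator_def)
    finally show "emeasure L1 (C \<times> D) = emeasure L2 (C \<times> D)" .
  qed
  then have "emeasure L1 E = emeasure L2 E" by simp
  then show ?thesis using e1[OF E] e2[OF E] unfolding K_def by simp
qed


lemma rect_lhs:
  assumes measA[measurable]: "A \<in> M \<rightarrow>\<^sub>M \<mu>" and measV[measurable]: "V \<in> M \<rightarrow>\<^sub>M N"
    and B[measurable]: "B \<in> sets \<mu>" and E[measurable]: "E \<in> sets N"
  shows "emeasure (distr M (\<mu> \<Otimes>\<^sub>M N) (\<lambda>\<omega>. (A \<omega>, V \<omega>))) (B \<times> E)
      = (\<integral>\<^sup>+\<omega>. ennreal (indicator E (V \<omega>) * indicator (A -` B \<inter> space M) \<omega>) \<partial>M)"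
proof -
  have "emeasure (distr M (\<mu> \<Otimes>\<^sub>M N) (\<lambda>\<omega>. (A \<omega>, V \<omega>))) (B \<times> E)
      = emeasure M ((\<lambda>\<omega>. (A \<omega>, V \<omega>)) -` (B \<times> E) \<inter> space M)"
    by (rule emeasure_distr) measurable
  also have "\<dots> = (\<integral>\<^sup>+\<omega>. ennreal (indicator E (V \<omega>) * indicator (A -` B \<inter> space M) \<omega>) \<partial>M)"
  proof -
    have Ss: "(\<lambda>\<omega>. (A \<omega>, V \<omega>)) -` (B \<times> E) \<inter> space M \<in> sets M" by measurable
    show ?thesis
      unfolding nn_integral_indicator[OF Ss, symmetric]
      by (rule nn_integral_cong) (auto simp: indicator_def)
  qed
  finally show ?thesis .
qed

lemma rect_rhs:
  assumes M: "prob_space M" and mu: "sigma_finite_measure \<mu>"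
    and measV[measurable]: "V \<in> M \<rightarrow>\<^sub>M N"
    and km[measurable]: "(\<lambda>(\<omega>, a). k \<omega> a) \<in> borel_measurable (M \<Otimes>\<^sub>M \<mu>)"
    and kpos: "\<And>\<omega> a. 0 \<le> k \<omega> a"
    and B[measurable]: "B \<in> sets \<mu>" and E[measurable]: "E \<in> sets N"
  shows "emeasure (distr (density (M \<Otimes>\<^sub>M \<mu>) (\<lambda>(\<omega>, a). ennreal (k \<omega> a))) (\<mu> \<Otimes>\<^sub>M N) (\<lambda>(\<omega>, a). (a, V \<omega>))) (B \<times> E)
     = (\<integral>\<^sup>+\<omega>. ennreal (indicator E (V \<omega>)) * (\<integral>\<^sup>+a. ennreal (indicator B a * k \<omega> a) \<partial>\<mu>) \<partial>M)"
proof -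
  interpret P: prob_space M by (rule M)
  interpret mu: sigma_finite_measure \<mu> by (rule mu)
  have "emeasure (distr (density (M \<Otimes>\<^sub>M \<mu>) (\<lambda>(\<omega>, a). ennreal (k \<omega> a))) (\<mu> \<Otimes>\<^sub>M N) (\<lambda>(\<omega>, a). (a, V \<omega>))) (B \<times> E)
     = (\<integral>\<^sup>+\<omega>. (\<integral>\<^sup>+a. ennreal (k \<omega> a) * indicator (B \<times> E) (a, V \<omega>) \<partial>\<mu>) \<partial>M)"
    by (rule emeasure_nuK[OF M mu measV km]) simp
  also have "\<dots> = (\<integral>\<^sup>+\<omega>. ennreal (indicator E (V \<omega>)) * (\<integral>\<^sup>+a. ennreal (indicator B a * k \<omega> a) \<partial>\<mu>) \<partial>M)"
  proof (rule nn_integral_cong)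
    fix \<omega> assume \<omega>: "\<omega> \<in> space M"
    have "(\<integral>\<^sup>+a. ennreal (k \<omega> a) * indicator (B \<times> E) (a, V \<omega>) \<partial>\<mu>)
        = (\<integral>\<^sup>+a. ennreal (indicator E (V \<omega>)) * ennreal (indicator B a * k \<omega> a) \<partial>\<mu>)"
      by (rule nn_integral_cong) (auto simp: indicator_def)
    also have "\<dots> = ennreal (indicator E (V \<omega>)) * (\<integral>\<^sup>+a. ennreal (indicator B a * k \<omega> a) \<partial>\<mu>)"
      by (rule nn_integral_cmult) (use km \<omega> in measurable)
    finally show "(\<integral>\<^sup>+a. ennreal (k \<omega> a) * indicator (B \<times> E) (a, V \<omega>) \<partial>\<mu>)
       = ennreal (indicator E (V \<omega>)) * (\<integral>\<^sup>+a. ennreal (indicator B a * k \<omega> a) \<partial>\<mu>)" .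
  qed
  finally show ?thesis .
qed

lemma law_eq_U:
  fixes M :: "'o measure" and \<mu> :: "'a measure"
    and MU :: "'u measure" and MW :: "'w measure" and MZ :: "'z measure" and MX :: "'x measure"
    and W :: "'o \<Rightarrow> 'w" and Z :: "'o \<Rightarrow> 'z" and A :: "'o \<Rightarrow> 'a"
    and X :: "'o \<Rightarrow> 'x" and U :: "'o \<Rightarrow> 'u" and Ya :: "'o \<Rightarrow> real"
    and fU :: "'a \<Rightarrow> 'u \<times> 'x \<Rightarrow> real"
  assumes M: "prob_space M" and mu: "sigma_finite_measure \<mu>"
    and measW[measurable]: "W \<in> M \<rightarrow>\<^sub>M MW"
    and measZ[measurable]: "Z \<in> M \<rightarrow>\<^sub>M MZ" and measA[measurable]: "A \<in> M \<rightarrow>\<^sub>M \<mu>"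
    and measX[measurable]: "X \<in> M \<rightarrow>\<^sub>M MX" and measU[measurable]: "U \<in> M \<rightarrow>\<^sub>M MU"
    and measYa[measurable]: "Ya \<in> borel_measurable M"
    and cd: "cond_density M \<mu> A (MU \<Otimes>\<^sub>M MX) (\<lambda>\<omega>. (U \<omega>, X \<omega>)) fU"
    and CI: "cond_indep M (gen M (MZ \<Otimes>\<^sub>M \<mu>) (\<lambda>\<omega>. (Z \<omega>, A \<omega>)))
                              (gen M (borel \<Otimes>\<^sub>M MW) (\<lambda>\<omega>. (Ya \<omega>, W \<omega>)))
                              (gen M (MU \<Otimes>\<^sub>M MX) (\<lambda>\<omega>. (U \<omega>, X \<omega>)))"
  shows "distr M (\<mu> \<Otimes>\<^sub>M (MW \<Otimes>\<^sub>M MX)) (\<lambda>\<omega>. (A \<omega>, (W \<omega>, X \<omega>)))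
     = distr (density (M \<Otimes>\<^sub>M \<mu>) (\<lambda>(\<omega>, a). ennreal (fU a (U \<omega>, X \<omega>)))) (\<mu> \<Otimes>\<^sub>M (MW \<Otimes>\<^sub>M MX)) (\<lambda>(\<omega>, a). (a, (W \<omega>, X \<omega>)))"
proof (rule pair_measure_eq[where Ma=\<mu> and Mb="MW \<Otimes>\<^sub>M MX"])
  interpret P: prob_space M by (rule M)
  have measWX[measurable]: "(\<lambda>\<omega>. (W \<omega>, X \<omega>)) \<in> M \<rightarrow>\<^sub>M MW \<Otimes>\<^sub>M MX" by measurable
  have fm[measurable]: "(\<lambda>(a, v). fU a v) \<in> borel_measurable (\<mu> \<Otimes>\<^sub>M (MU \<Otimes>\<^sub>M MX))"
    using cd unfolding cond_density_def by blast
  have fpos: "\<And>a v. 0 \<le> fU a v" using cd unfolding cond_density_def by blast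
  have km: "(\<lambda>(\<omega>, a). fU a (U \<omega>, X \<omega>)) \<in> borel_measurable (M \<Otimes>\<^sub>M \<mu>)"
  proof -
    have "(\<lambda>(\<omega>, a). (a, (U \<omega>, X \<omega>))) \<in> M \<Otimes>\<^sub>M \<mu> \<rightarrow>\<^sub>M \<mu> \<Otimes>\<^sub>M (MU \<Otimes>\<^sub>M MX)" by measurable
    from measurable_compose[OF this fm] show ?thesis by (simp add: case_prod_beta')
  qed
  interpret D: prob_space "distr M (\<mu> \<Otimes>\<^sub>M (MW \<Otimes>\<^sub>M MX)) (\<lambda>\<omega>. (A \<omega>, (W \<omega>, X \<omega>)))"
    by (rule P.prob_space_distr) measurable
  show "emeasure (distr M (\<mu> \<Otimes>\<^sub>M (MW \<Otimes>\<^sub>M MX)) (\<lambda>\<omega>. (A \<omega>, (W \<omega>, X \<omega>)))) (space \<mu> \<times> space (MW \<Otimes>\<^sub>M MX)) \<noteq> \<infinity>"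
    using D.emeasure_finite by simp
  fix B E assume B[measurable]: "B \<in> sets \<mu>" and E[measurable]: "E \<in> sets (MW \<Otimes>\<^sub>M MX)"
  have "emeasure (distr M (\<mu> \<Otimes>\<^sub>M (MW \<Otimes>\<^sub>M MX)) (\<lambda>\<omega>. (A \<omega>, (W \<omega>, X \<omega>)))) (B \<times> E)
      = (\<integral>\<^sup>+\<omega>. ennreal (indicator E (W \<omega>, X \<omega>) * indicator (A -` B \<inter> space M) \<omega>) \<partial>M)"
    by (rule rect_lhs[OF measA measWX B E])
  also have "\<dots> = (\<integral>\<^sup>+\<omega>. ennreal (indicator E (W \<omega>, X \<omega>)) * (\<integral>\<^sup>+a. ennreal (indicator B a * fU a (U \<omega>, X \<omega>)) \<partial>\<mu>) \<partial>M)"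
    by (rule inner_U[OF M mu measW measZ measA measX measU measYa cd CI B E])
  also have "\<dots> = emeasure (distr (density (M \<Otimes>\<^sub>M \<mu>) (\<lambda>(\<omega>, a). ennreal (fU a (U \<omega>, X \<omega>)))) (\<mu> \<Otimes>\<^sub>M (MW \<Otimes>\<^sub>M MX)) (\<lambda>(\<omega>, a). (a, (W \<omega>, X \<omega>)))) (B \<times> E)"
    by (rule rect_rhs[OF M mu measWX km fpos B E, symmetric])
  finally show "emeasure (distr M (\<mu> \<Otimes>\<^sub>M (MW \<Otimes>\<^sub>M MX)) (\<lambda>\<omega>. (A \<omega>, (W \<omega>, X \<omega>)))) (B \<times> E)
     = emeasure (distr (density (M \<Otimes>\<^sub>M \<mu>) (\<lambda>(\<omega>, a). ennreal (fU a (U \<omega>, X \<omega>)))) (\<mu> \<Otimes>\<^sub>M (MW \<Otimes>\<^sub>M MX)) (\<lambda>(\<omega>, a). (a, (W \<omega>, X \<omega>)))) (B \<times> E)" .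
qed simp_all

lemma disint:
  fixes M :: "'o measure" and \<mu> :: "'a measure"
    and MU :: "'u measure" and MW :: "'w measure" and MZ :: "'z measure" and MX :: "'x measure"
    and W :: "'o \<Rightarrow> 'w" and Z :: "'o \<Rightarrow> 'z" and A :: "'o \<Rightarrow> 'a"
    and X :: "'o \<Rightarrow> 'x" and U :: "'o \<Rightarrow> 'u" and Ya :: "'o \<Rightarrow> real"
    and fU :: "'a \<Rightarrow> 'u \<times> 'x \<Rightarrow> real" and fW :: "'a \<Rightarrow> 'w \<times> 'x \<Rightarrow> real"
    and \<pi> :: "'a \<Rightarrow> 'x \<Rightarrow> real" and h :: "'w \<Rightarrow> 'a \<Rightarrow> 'x \<Rightarrow> real"
  assumes M: "prob_space M" and mu: "sigma_finite_measure \<mu>"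
    and measW[measurable]: "W \<in> M \<rightarrow>\<^sub>M MW"
    and measZ[measurable]: "Z \<in> M \<rightarrow>\<^sub>M MZ" and measA[measurable]: "A \<in> M \<rightarrow>\<^sub>M \<mu>"
    and measX[measurable]: "X \<in> M \<rightarrow>\<^sub>M MX" and measU[measurable]: "U \<in> M \<rightarrow>\<^sub>M MU"
    and measYa[measurable]: "Ya \<in> borel_measurable M"
    and cdU: "cond_density M \<mu> A (MU \<Otimes>\<^sub>M MX) (\<lambda>\<omega>. (U \<omega>, X \<omega>)) fU"
    and cdW: "cond_density M \<mu> A (MW \<Otimes>\<^sub>M MX) (\<lambda>\<omega>. (W \<omega>, X \<omega>)) fW"
    and CI: "cond_indep M (gen M (MZ \<Otimes>\<^sub>M \<mu>) (\<lambda>\<omega>. (Z \<omega>, A \<omega>)))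
                              (gen M (borel \<Otimes>\<^sub>M MW) (\<lambda>\<omega>. (Ya \<omega>, W \<omega>)))
                              (gen M (MU \<Otimes>\<^sub>M MX) (\<lambda>\<omega>. (U \<omega>, X \<omega>)))"
    and NC5: "\<forall>a x u. \<pi> a x \<noteq> 0 \<longrightarrow> fU a (u, x) \<noteq> 0"
    and measpi[measurable]: "(\<lambda>(a, x). \<pi> a x) \<in> borel_measurable (\<mu> \<Otimes>\<^sub>M MX)"
    and hm[measurable]: "(\<lambda>(w, a, x). h w a x) \<in> borel_measurable (MW \<Otimes>\<^sub>M \<mu> \<Otimes>\<^sub>M MX)"
    and hT: "(AE \<omega> in M. integrable \<mu> (\<lambda>a. h (W \<omega>) a (X \<omega>) * \<pi> a (X \<omega>))) \<and>
                   integrable M (\<lambda>\<omega>. \<integral>a. \<bar>h (W \<omega>) a (X \<omega>) * \<pi> a (X \<omega>)\<bar> \<partial>\<mu>)"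
  shows "(\<integral>\<omega>. h (W \<omega>) (A \<omega>) (X \<omega>) * (\<pi> (A \<omega>) (X \<omega>) / fW (A \<omega>) (W \<omega>, X \<omega>)) \<partial>M)
       = (\<integral>\<omega>. Top \<mu> \<pi> h (W \<omega>) (X \<omega>) \<partial>M)"
proof -
  interpret P: prob_space M by (rule M)
  interpret mu: sigma_finite_measure \<mu> by (rule mu)
  interpret PS: pair_sigma_finite M \<mu> by standard
  let ?N = "MW \<Otimes>\<^sub>M MX"
  have measWX[measurable]: "(\<lambda>\<omega>. (W \<omega>, X \<omega>)) \<in> M \<rightarrow>\<^sub>M ?N" by measurable
  have Tm[measurable]: "(\<lambda>(\<omega>, a). (a, (W \<omega>, X \<omega>))) \<in> M \<Otimes>\<^sub>M \<mu> \<rightarrow>\<^sub>M \<mu> \<Otimes>\<^sub>M ?N" by measurable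
  have fWm[measurable]: "(\<lambda>(a, v). fW a v) \<in> borel_measurable (\<mu> \<Otimes>\<^sub>M ?N)"
    using cdW unfolding cond_density_def by blast
  have fUm[measurable]: "(\<lambda>(a, v). fU a v) \<in> borel_measurable (\<mu> \<Otimes>\<^sub>M (MU \<Otimes>\<^sub>M MX))"
    using cdU unfolding cond_density_def by blast
  have fWpos: "\<And>a v. 0 \<le> fW a v" using cdW unfolding cond_density_def by blast
  have fUpos: "\<And>a v. 0 \<le> fU a v" using cdU unfolding cond_density_def by blast
  have kWm[measurable]: "(\<lambda>(\<omega>, a). fW a (W \<omega>, X \<omega>)) \<in> borel_measurable (M \<Otimes>\<^sub>M \<mu>)"
    using measurable_compose[OF Tm fWm] by (simp add: case_prod_beta')
  have kUm[measurable]: "(\<lambda>(\<omega>, a). fU a (U \<omega>, X \<omega>)) \<in> borel_measurable (M \<Otimes>\<^sub>M \<mu>)"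
  proof -
    have "(\<lambda>(\<omega>, a). (a, (U \<omega>, X \<omega>))) \<in> M \<Otimes>\<^sub>M \<mu> \<rightarrow>\<^sub>M \<mu> \<Otimes>\<^sub>M (MU \<Otimes>\<^sub>M MX)" by measurable
    from measurable_compose[OF this fUm] show ?thesis by (simp add: case_prod_beta')
  qed
  have psim[measurable]: "(\<lambda>(a, (w, x)). h w a x * (\<pi> a x / fW a (w, x))) \<in> borel_measurable (\<mu> \<Otimes>\<^sub>M ?N)"
  proof -
    have 1: "(\<lambda>(a, (w, x)). (w, a, x)) \<in> \<mu> \<Otimes>\<^sub>M ?N \<rightarrow>\<^sub>M MW \<Otimes>\<^sub>M \<mu> \<Otimes>\<^sub>M MX" by measurable
    have 2: "(\<lambda>(a, (w, x)). (a, x)) \<in> \<mu> \<Otimes>\<^sub>M ?N \<rightarrow>\<^sub>M \<mu> \<Otimes>\<^sub>M MX" by measurable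
    have "(\<lambda>p. h (fst (snd p)) (fst p) (snd (snd p))) \<in> borel_measurable (\<mu> \<Otimes>\<^sub>M ?N)"
      using measurable_compose[OF 1 hm] by (simp add: case_prod_beta')
    moreover have "(\<lambda>p. \<pi> (fst p) (snd (snd p))) \<in> borel_measurable (\<mu> \<Otimes>\<^sub>M ?N)"
      using measurable_compose[OF 2 measpi] by (simp add: case_prod_beta')
    moreover have "(\<lambda>p. fW (fst p) (snd p)) \<in> borel_measurable (\<mu> \<Otimes>\<^sub>M ?N)"
      using fWm by (simp add: case_prod_beta')
    ultimately have "(\<lambda>p. h (fst (snd p)) (fst p) (snd (snd p)) * (\<pi> (fst p) (snd (snd p)) / fW (fst p) (snd p))) \<in> borel_measurable (\<mu> \<Otimes>\<^sub>M ?N)"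
      by measurable
    then show ?thesis by (simp add: case_prod_beta')
  qed
  have hpim[measurable]: "(\<lambda>(\<omega>, a). h (W \<omega>) a (X \<omega>) * \<pi> a (X \<omega>)) \<in> borel_measurable (M \<Otimes>\<^sub>M \<mu>)"
  proof -
    have 1: "(\<lambda>(\<omega>, a). (W \<omega>, a, X \<omega>)) \<in> M \<Otimes>\<^sub>M \<mu> \<rightarrow>\<^sub>M MW \<Otimes>\<^sub>M \<mu> \<Otimes>\<^sub>M MX" by measurable
    have 2: "(\<lambda>(\<omega>, a). (a, X \<omega>)) \<in> M \<Otimes>\<^sub>M \<mu> \<rightarrow>\<^sub>M \<mu> \<Otimes>\<^sub>M MX" by measurable
    have "(\<lambda>p. h (W (fst p)) (snd p) (X (fst p))) \<in> borel_measurable (M \<Otimes>\<^sub>M \<mu>)"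
      using measurable_compose[OF 1 hm] by (simp add: case_prod_beta')
    moreover have "(\<lambda>p. \<pi> (snd p) (X (fst p))) \<in> borel_measurable (M \<Otimes>\<^sub>M \<mu>)"
      using measurable_compose[OF 2 measpi] by (simp add: case_prod_beta')
    ultimately show ?thesis by (simp add: case_prod_beta')
  qed
  define S where "S = {p \<in> space (\<mu> \<Otimes>\<^sub>M ?N). fW (fst p) (snd p) = 0 \<and> \<pi> (fst p) (snd (snd p)) \<noteq> 0}"
  have Ss[measurable]: "S \<in> sets (\<mu> \<Otimes>\<^sub>M ?N)"
  proof -
    have "(\<lambda>p. fW (fst p) (snd p)) \<in> borel_measurable (\<mu> \<Otimes>\<^sub>M ?N)"
      using fWm by (simp add: case_prod_beta')
    moreover have "(\<lambda>p. \<pi> (fst p) (snd (snd p))) \<in> borel_measurable (\<mu> \<Otimes>\<^sub>M ?N)"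
    proof -
      have 2: "(\<lambda>(a, (w, x)). (a, x)) \<in> \<mu> \<Otimes>\<^sub>M ?N \<rightarrow>\<^sub>M \<mu> \<Otimes>\<^sub>M MX" by measurable
      show ?thesis using measurable_compose[OF 2 measpi] by (simp add: case_prod_beta')
    qed
    ultimately show ?thesis unfolding S_def by measurable
  qed
  have lawW: "distr M (\<mu> \<Otimes>\<^sub>M ?N) (\<lambda>\<omega>. (A \<omega>, (W \<omega>, X \<omega>)))
     = distr (density (M \<Otimes>\<^sub>M \<mu>) (\<lambda>(\<omega>, a). ennreal (fW a (W \<omega>, X \<omega>)))) (\<mu> \<Otimes>\<^sub>M ?N) (\<lambda>(\<omega>, a). (a, (W \<omega>, X \<omega>)))"
    by (rule law_eq[OF M mu measA measWX cdW])
  have lawU: "distr M (\<mu> \<Otimes>\<^sub>M ?N) (\<lambda>\<omega>. (A \<omega>, (W \<omega>, X \<omega>)))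
     = distr (density (M \<Otimes>\<^sub>M \<mu>) (\<lambda>(\<omega>, a). ennreal (fU a (U \<omega>, X \<omega>)))) (\<mu> \<Otimes>\<^sub>M ?N) (\<lambda>(\<omega>, a). (a, (W \<omega>, X \<omega>)))"
    by (rule law_eq_U[OF M mu measW measZ measA measX measU measYa cdU CI])
  have "emeasure (distr (density (M \<Otimes>\<^sub>M \<mu>) (\<lambda>(\<omega>, a). ennreal (fW a (W \<omega>, X \<omega>)))) (\<mu> \<Otimes>\<^sub>M ?N) (\<lambda>(\<omega>, a). (a, (W \<omega>, X \<omega>)))) S
     = (\<integral>\<^sup>+\<omega>. (\<integral>\<^sup>+a. ennreal (fW a (W \<omega>, X \<omega>)) * indicator S (a, (W \<omega>, X \<omega>)) \<partial>\<mu>) \<partial>M)"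
    by (rule emeasure_nuK[OF M mu measWX kWm Ss])
  also have "\<dots> = 0"
    by (auto intro!: nn_integral_zero' simp: S_def indicator_def)
  finally have "emeasure (distr (density (M \<Otimes>\<^sub>M \<mu>) (\<lambda>(\<omega>, a). ennreal (fU a (U \<omega>, X \<omega>)))) (\<mu> \<Otimes>\<^sub>M ?N) (\<lambda>(\<omega>, a). (a, (W \<omega>, X \<omega>)))) S = 0"
    using lawW lawU by simp
  moreover have "emeasure (distr (density (M \<Otimes>\<^sub>M \<mu>) (\<lambda>(\<omega>, a). ennreal (fU a (U \<omega>, X \<omega>)))) (\<mu> \<Otimes>\<^sub>M ?N) (\<lambda>(\<omega>, a). (a, (W \<omega>, X \<omega>)))) S
     = (\<integral>\<^sup>+\<omega>. (\<integral>\<^sup>+a. ennreal (fU a (U \<omega>, X \<omega>)) * indicator S (a, (W \<omega>, X \<omega>)) \<partial>\<mu>) \<partial>M)"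
    by (rule emeasure_nuK[OF M mu measWX kUm Ss])
  moreover have "(\<integral>\<^sup>+\<omega>. (\<integral>\<^sup>+a. ennreal (fU a (U \<omega>, X \<omega>)) * indicator S (a, (W \<omega>, X \<omega>)) \<partial>\<mu>) \<partial>M)
     = (\<integral>\<^sup>+p. (\<lambda>(\<omega>, a). ennreal (fU a (U \<omega>, X \<omega>)) * indicator S (a, (W \<omega>, X \<omega>))) p \<partial>(M \<Otimes>\<^sub>M \<mu>))"
  proof -
    have "(\<lambda>(\<omega>, a). ennreal (fU a (U \<omega>, X \<omega>)) * indicator S (a, (W \<omega>, X \<omega>))) \<in> borel_measurable (M \<Otimes>\<^sub>M \<mu>)"
      by measurable
    from mu.nn_integral_fst[OF this] show ?thesis by simp
  qed
  ultimately have "(\<integral>\<^sup>+p. (\<lambda>(\<omega>, a). ennreal (fU a (U \<omega>, X \<omega>)) * indicator S (a, (W \<omega>, X \<omega>))) p \<partial>(M \<Otimes>\<^sub>M \<mu>)) = 0"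
    by simp
  then have AE0: "AE p in M \<Otimes>\<^sub>M \<mu>. (\<lambda>(\<omega>, a). ennreal (fU a (U \<omega>, X \<omega>)) * indicator S (a, (W \<omega>, X \<omega>))) p = 0"
    by (subst (asm) nn_integral_0_iff_AE) measurable
  have AEnull: "AE p in M \<Otimes>\<^sub>M \<mu>. fW (snd p) (W (fst p), X (fst p)) = 0 \<longrightarrow> \<pi> (snd p) (X (fst p)) = 0"
    using AE0 AE_space
  proof eventually_elim
    case (elim p)
    obtain \<omega> a where p: "p = (\<omega>, a)" by (cases p)
    have \<omega>: "\<omega> \<in> space M" and a: "a \<in> space \<mu>" using elim(2) p by (auto simp: space_pair_measure)
    have inN: "(a, (W \<omega>, X \<omega>)) \<in> space (\<mu> \<Otimes>\<^sub>M ?N)"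
      using a measurable_space[OF measW \<omega>] measurable_space[OF measX \<omega>] by (auto simp: space_pair_measure)
    show ?case
    proof (rule impI, rule ccontr)
      assume f0: "fW (snd p) (W (fst p), X (fst p)) = 0" and pn: "\<pi> (snd p) (X (fst p)) \<noteq> 0"
      then have "(a, (W \<omega>, X \<omega>)) \<in> S" using inN p by (simp add: S_def)
      moreover have "fU a (U \<omega>, X \<omega>) > 0" using NC5 pn fUpos[of a "(U \<omega>, X \<omega>)"] p
        by (metis fst_conv snd_conv less_eq_real_def)
      ultimately show False using elim(1) p by (simp add: indicator_def)
    qed
  qed
  have intP: "integrable (M \<Otimes>\<^sub>M \<mu>) (\<lambda>(\<omega>, a). h (W \<omega>) a (X \<omega>) * \<pi> a (X \<omega>))"
  proof (rule PS.Fubini_integrable)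
    show "integrable M (\<lambda>x. \<integral>y. norm ((\<lambda>(\<omega>, a). h (W \<omega>) a (X \<omega>) * \<pi> a (X \<omega>)) (x, y)) \<partial>\<mu>)"
      using hT by simp
    show "AE x in M. integrable \<mu> (\<lambda>y. (\<lambda>(\<omega>, a). h (W \<omega>) a (X \<omega>) * \<pi> a (X \<omega>)) (x, y))"
      using hT by simp
  qed measurable
  define \<psi> :: "'a \<times> 'w \<times> 'x \<Rightarrow> real" where "\<psi> = (\<lambda>(a, (w, x)). h w a x * (\<pi> a x / fW a (w, x)))"
  define T :: "'o \<times> 'a \<Rightarrow> 'a \<times> 'w \<times> 'x" where "T = (\<lambda>(\<omega>, a). (a, (W \<omega>, X \<omega>)))"
  define kW :: "'o \<times> 'a \<Rightarrow> real" where "kW = (\<lambda>(\<omega>, a). fW a (W \<omega>, X \<omega>))"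
  define hp :: "'o \<times> 'a \<Rightarrow> real" where "hp = (\<lambda>(\<omega>, a). h (W \<omega>) a (X \<omega>) * \<pi> a (X \<omega>))"
  have psim': "\<psi> \<in> borel_measurable (\<mu> \<Otimes>\<^sub>M ?N)" unfolding \<psi>_def by (rule psim)
  have Tm': "T \<in> M \<Otimes>\<^sub>M \<mu> \<rightarrow>\<^sub>M \<mu> \<Otimes>\<^sub>M ?N" unfolding T_def by (rule Tm)
  have kWm': "kW \<in> borel_measurable (M \<Otimes>\<^sub>M \<mu>)" unfolding kW_def by (rule kWm)
  have hpm': "hp \<in> borel_measurable (M \<Otimes>\<^sub>M \<mu>)" unfolding hp_def by (rule hpim)
  have pT: "(\<lambda>p. \<psi> (T p)) \<in> borel_measurable (M \<Otimes>\<^sub>M \<mu>)" by (rule measurable_compose[OF Tm' psim'])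
  have AV: "(\<lambda>\<omega>. (A \<omega>, (W \<omega>, X \<omega>))) \<in> M \<rightarrow>\<^sub>M \<mu> \<Otimes>\<^sub>M ?N" by measurable
  have dens_eq: "(\<lambda>(\<omega>, a). ennreal (fW a (W \<omega>, X \<omega>))) = (\<lambda>p. ennreal (kW p))"
    unfolding kW_def by (simp add: case_prod_beta')
  have aux: "f * (g * (p / f)) = g * p" if "f = 0 \<longrightarrow> p = 0" for f g p :: real
    using that by (cases "f = 0") auto
  have "(\<integral>\<omega>. h (W \<omega>) (A \<omega>) (X \<omega>) * (\<pi> (A \<omega>) (X \<omega>) / fW (A \<omega>) (W \<omega>, X \<omega>)) \<partial>M)
      = (\<integral>\<omega>. \<psi> (A \<omega>, (W \<omega>, X \<omega>)) \<partial>M)"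
    unfolding \<psi>_def by simp
  also have "\<dots> = integral\<^sup>L (distr M (\<mu> \<Otimes>\<^sub>M ?N) (\<lambda>\<omega>. (A \<omega>, (W \<omega>, X \<omega>)))) \<psi>"
    by (rule integral_distr[OF AV psim', symmetric])
  also have "\<dots> = integral\<^sup>L (distr (density (M \<Otimes>\<^sub>M \<mu>) (\<lambda>p. ennreal (kW p))) (\<mu> \<Otimes>\<^sub>M ?N) T) \<psi>"
    using lawW unfolding dens_eq T_def by simp
  also have "\<dots> = integral\<^sup>L (density (M \<Otimes>\<^sub>M \<mu>) (\<lambda>p. ennreal (kW p))) (\<lambda>p. \<psi> (T p))"
  proof (rule integral_distr[OF _ psim'])
    show "T \<in> density (M \<Otimes>\<^sub>M \<mu>) (\<lambda>p. ennreal (kW p)) \<rightarrow>\<^sub>M \<mu> \<Otimes>\<^sub>M ?N"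
      using Tm' by simp
  qed
  also have "\<dots> = (\<integral>p. kW p *\<^sub>R \<psi> (T p) \<partial>(M \<Otimes>\<^sub>M \<mu>))"
    by (rule integral_density[OF pT kWm']) (simp add: kW_def fWpos split: prod.splits)
  also have "\<dots> = (\<integral>p. hp p \<partial>(M \<Otimes>\<^sub>M \<mu>))"
  proof (rule integral_cong_AE)
    show "(\<lambda>p. kW p *\<^sub>R \<psi> (T p)) \<in> borel_measurable (M \<Otimes>\<^sub>M \<mu>)"
      using kWm' pT by (rule borel_measurable_scaleR)
    show "hp \<in> borel_measurable (M \<Otimes>\<^sub>M \<mu>)" by (rule hpm')
    show "AE p in M \<Otimes>\<^sub>M \<mu>. kW p *\<^sub>R \<psi> (T p) = hp p"
      using AEnull
    proof eventually_elim
      case (elim p)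
      obtain \<omega> a where p: "p = (\<omega>, a)" by (cases p)
      have "fW a (W \<omega>, X \<omega>) = 0 \<longrightarrow> \<pi> a (X \<omega>) = 0" using elim p by simp
      then have "fW a (W \<omega>, X \<omega>) * (h (W \<omega>) a (X \<omega>) * (\<pi> a (X \<omega>) / fW a (W \<omega>, X \<omega>)))
          = h (W \<omega>) a (X \<omega>) * \<pi> a (X \<omega>)" by (rule aux)
      then show ?case by (simp add: p kW_def \<psi>_def T_def hp_def)
    qed
  qed
  also have "\<dots> = (\<integral>\<omega>. (\<integral>a. h (W \<omega>) a (X \<omega>) * \<pi> a (X \<omega>) \<partial>\<mu>) \<partial>M)"
    using PS.integral_fst[of "\<lambda>\<omega> a. h (W \<omega>) a (X \<omega>) * \<pi> a (X \<omega>)"] intP unfolding hp_def by simp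
  also have "\<dots> = (\<integral>\<omega>. Top \<mu> \<pi> h (W \<omega>) (X \<omega>) \<partial>M)"
    by (simp add: Top_def)
  finally show ?thesis .
qed


lemma Top_integrable:
  fixes M :: "'o measure" and \<mu> :: "'a measure" and MW :: "'w measure" and MX :: "'x measure"
    and W :: "'o \<Rightarrow> 'w" and X :: "'o \<Rightarrow> 'x"
    and \<pi> :: "'a \<Rightarrow> 'x \<Rightarrow> real" and h :: "'w \<Rightarrow> 'a \<Rightarrow> 'x \<Rightarrow> real"
  assumes M: "prob_space M" and mu: "sigma_finite_measure \<mu>"
    and measW[measurable]: "W \<in> M \<rightarrow>\<^sub>M MW" and measX[measurable]: "X \<in> M \<rightarrow>\<^sub>M MX"
    and measpi[measurable]: "(\<lambda>(a, x). \<pi> a x) \<in> borel_measurable (\<mu> \<Otimes>\<^sub>M MX)"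
    and hm[measurable]: "(\<lambda>(w, a, x). h w a x) \<in> borel_measurable (MW \<Otimes>\<^sub>M \<mu> \<Otimes>\<^sub>M MX)"
    and hT: "(AE \<omega> in M. integrable \<mu> (\<lambda>a. h (W \<omega>) a (X \<omega>) * \<pi> a (X \<omega>))) \<and>
                   integrable M (\<lambda>\<omega>. \<integral>a. \<bar>h (W \<omega>) a (X \<omega>) * \<pi> a (X \<omega>)\<bar> \<partial>\<mu>)"
  shows "integrable M (\<lambda>\<omega>. Top \<mu> \<pi> h (W \<omega>) (X \<omega>))"
proof -
  interpret P: prob_space M by (rule M)
  interpret mu: sigma_finite_measure \<mu> by (rule mu)
  interpret PS: pair_sigma_finite M \<mu> by standard
  have hpim[measurable]: "(\<lambda>(\<omega>, a). h (W \<omega>) a (X \<omega>) * \<pi> a (X \<omega>)) \<in> borel_measurable (M \<Otimes>\<^sub>M \<mu>)"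
  proof -
    have 1: "(\<lambda>(\<omega>, a). (W \<omega>, a, X \<omega>)) \<in> M \<Otimes>\<^sub>M \<mu> \<rightarrow>\<^sub>M MW \<Otimes>\<^sub>M \<mu> \<Otimes>\<^sub>M MX" by measurable
    have 2: "(\<lambda>(\<omega>, a). (a, X \<omega>)) \<in> M \<Otimes>\<^sub>M \<mu> \<rightarrow>\<^sub>M \<mu> \<Otimes>\<^sub>M MX" by measurable
    have "(\<lambda>p. h (W (fst p)) (snd p) (X (fst p))) \<in> borel_measurable (M \<Otimes>\<^sub>M \<mu>)"
      using measurable_compose[OF 1 hm] by (simp add: case_prod_beta')
    moreover have "(\<lambda>p. \<pi> (snd p) (X (fst p))) \<in> borel_measurable (M \<Otimes>\<^sub>M \<mu>)"
      using measurable_compose[OF 2 measpi] by (simp add: case_prod_beta')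
    ultimately show ?thesis by (simp add: case_prod_beta')
  qed
  have intP: "integrable (M \<Otimes>\<^sub>M \<mu>) (\<lambda>(\<omega>, a). h (W \<omega>) a (X \<omega>) * \<pi> a (X \<omega>))"
  proof (rule PS.Fubini_integrable)
    show "integrable M (\<lambda>x. \<integral>y. norm ((\<lambda>(\<omega>, a). h (W \<omega>) a (X \<omega>) * \<pi> a (X \<omega>)) (x, y)) \<partial>\<mu>)"
      using hT by simp
    show "AE x in M. integrable \<mu> (\<lambda>y. (\<lambda>(\<omega>, a). h (W \<omega>) a (X \<omega>) * \<pi> a (X \<omega>)) (x, y))"
      using hT by simp
  qed measurable
  show ?thesis
    using PS.integrable_fst[of "\<lambda>\<omega> a. h (W \<omega>) a (X \<omega>) * \<pi> a (X \<omega>)"] intP by (simp add: Top_def)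
qed

lemma part2:
  fixes M :: "'o measure" and \<mu> :: "'a measure"
    and MU :: "'u measure" and MW :: "'w measure" and MZ :: "'z measure" and MX :: "'x measure"
    and Y :: "'o \<Rightarrow> real" and W :: "'o \<Rightarrow> 'w" and Z :: "'o \<Rightarrow> 'z" and A :: "'o \<Rightarrow> 'a"
    and X :: "'o \<Rightarrow> 'x" and U :: "'o \<Rightarrow> 'u"
    and Ya :: "'a \<Rightarrow> 'o \<Rightarrow> real" and Yaz :: "'a \<Rightarrow> 'z \<Rightarrow> 'o \<Rightarrow> real"
    and Waz :: "'a \<Rightarrow> 'z \<Rightarrow> 'o \<Rightarrow> 'w"
    and \<pi> :: "'a \<Rightarrow> 'x \<Rightarrow> real"
    and fU :: "'a \<Rightarrow> 'u \<times> 'x \<Rightarrow> real" and fW :: "'a \<Rightarrow> 'w \<times> 'x \<Rightarrow> real"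
    and D :: "(real \<times> 'w \<times> 'z \<times> 'a \<times> 'x) list"
    and HH :: "('w \<Rightarrow> 'a \<Rightarrow> 'x \<Rightarrow> real) set" and HH' :: "('w \<Rightarrow> 'a \<Rightarrow> 'x \<Rightarrow> real) set"
    and QQ :: "('z \<Rightarrow> 'a \<Rightarrow> 'x \<Rightarrow> real) set" and QQ' :: "('z \<Rightarrow> 'a \<Rightarrow> 'x \<Rightarrow> real) set"
    and hhat :: "'w \<Rightarrow> 'a \<Rightarrow> 'x \<Rightarrow> real" and qhat :: "'z \<Rightarrow> 'a \<Rightarrow> 'x \<Rightarrow> real"
  assumes M: "prob_space M" and mu: "sigma_finite_measure \<mu>"
    and measY: "Y \<in> borel_measurable M" and measW: "W \<in> M \<rightarrow>\<^sub>M MW"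
    and measZ: "Z \<in> M \<rightarrow>\<^sub>M MZ" and measA: "A \<in> M \<rightarrow>\<^sub>M \<mu>"
    and measX: "X \<in> M \<rightarrow>\<^sub>M MX" and measU: "U \<in> M \<rightarrow>\<^sub>M MU"
    and measYa: "\<forall>a. Ya a \<in> borel_measurable M"
    and measYaz: "\<forall>a z. Yaz a z \<in> borel_measurable M"
    and measWaz: "\<forall>a z. Waz a z \<in> M \<rightarrow>\<^sub>M MW"
    and measpi: "(\<lambda>(a, x). \<pi> a x) \<in> borel_measurable (\<mu> \<Otimes>\<^sub>M MX)"
    and dens_U: "cond_density M \<mu> A (MU \<Otimes>\<^sub>M MX) (\<lambda>\<omega>. (U \<omega>, X \<omega>)) fU"
    and dens_W: "cond_density M \<mu> A (MW \<Otimes>\<^sub>M MX) (\<lambda>\<omega>. (W \<omega>, X \<omega>)) fW"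
    and NC1: "(AE \<omega> in M. Y \<omega> = Yaz (A \<omega>) (Z \<omega>) \<omega>) \<and> (AE \<omega> in M. W \<omega> = Waz (A \<omega>) (Z \<omega>) \<omega>)"
    and NC2: "\<forall>a z. AE \<omega> in M. Yaz a z \<omega> = Ya a \<omega>"
    and NC3: "\<forall>a z. AE \<omega> in M. Waz a z \<omega> = W \<omega>"
    and NC4: "\<forall>a. cond_indep M (gen M (MZ \<Otimes>\<^sub>M \<mu>) (\<lambda>\<omega>. (Z \<omega>, A \<omega>)))
                              (gen M (borel \<Otimes>\<^sub>M MW) (\<lambda>\<omega>. (Ya a \<omega>, W \<omega>)))
                              (gen M (MU \<Otimes>\<^sub>M MX) (\<lambda>\<omega>. (U \<omega>, X \<omega>)))"
    and NC5: "\<forall>a x u. \<pi> a x \<noteq> 0 \<longrightarrow> fU a (u, x) \<noteq> 0"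
    and B: "H0 M MW \<mu> MU MX Y W A U X \<noteq> {}" "Q0 M MZ \<mu> MU MX \<pi> fU Z A U X \<noteq> {}"
    and Y_L2: "integrable M (\<lambda>\<omega>. (Y \<omega>)\<^sup>2)"
    and HH_L2: "\<forall>h\<in>HH. L2fun M (MW \<Otimes>\<^sub>M \<mu> \<Otimes>\<^sub>M MX) (\<lambda>\<omega>. (W \<omega>, A \<omega>, X \<omega>)) (\<lambda>(w, a, x). h w a x)"
    and HH'_L2: "\<forall>h\<in>HH'. L2fun M (MW \<Otimes>\<^sub>M \<mu> \<Otimes>\<^sub>M MX) (\<lambda>\<omega>. (W \<omega>, A \<omega>, X \<omega>)) (\<lambda>(w, a, x). h w a x)"
    and HH'_T: "\<forall>h\<in>HH'. (AE \<omega> in M. integrable \<mu> (\<lambda>a. h (W \<omega>) a (X \<omega>) * \<pi> a (X \<omega>))) \<and>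
                   integrable M (\<lambda>\<omega>. \<integral>a. \<bar>h (W \<omega>) a (X \<omega>) * \<pi> a (X \<omega>)\<bar> \<partial>\<mu>)"
    and QQ_L2: "\<forall>q\<in>QQ. L2fun M (MZ \<Otimes>\<^sub>M \<mu> \<Otimes>\<^sub>M MX) (\<lambda>\<omega>. (Z \<omega>, A \<omega>, X \<omega>)) (\<lambda>(z, a, x). \<pi> a x * q z a x)"
    and QQ'_L2: "\<forall>q\<in>QQ'. L2fun M (MZ \<Otimes>\<^sub>M \<mu> \<Otimes>\<^sub>M MX) (\<lambda>\<omega>. (Z \<omega>, A \<omega>, X \<omega>)) (\<lambda>(z, a, x). q z a x)"
    and D: "D \<noteq> []"
    and hhat: "hhat \<in> HH \<and> (\<forall>h\<in>HH.
       (SUP q\<in>QQ'. ereal ((emp_mean D (\<lambda>(y, w, z, a, x). q z a x * (hhat w a x - y)))\<^sup>2))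
         \<le> (SUP q\<in>QQ'. ereal ((emp_mean D (\<lambda>(y, w, z, a, x). q z a x * (h w a x - y)))\<^sup>2)))"
    and qhat: "qhat \<in> QQ \<and> (\<forall>q\<in>QQ.
       (SUP h\<in>HH'. ereal ((emp_mean D (\<lambda>(y, w, z, a, x).
             \<pi> a x * qhat z a x * h w a x - Top \<mu> \<pi> h w x))\<^sup>2))
         \<le> (SUP h\<in>HH'. ereal ((emp_mean D (\<lambda>(y, w, z, a, x).
             \<pi> a x * q z a x * h w a x - Top \<mu> \<pi> h w x))\<^sup>2)))"
    and q0: "q0 \<in> QQ \<inter> Q0obs M MW MZ \<mu> MX \<pi> fW W Z A X"
    and proj2: "\<forall>q\<in>QQ. \<exists>h\<in>HH'. AE \<omega> in M. h (W \<omega>) (A \<omega>) (X \<omega>) =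
            condE M (MW \<Otimes>\<^sub>M \<mu> \<Otimes>\<^sub>M MX) (\<lambda>\<omega>. (W \<omega>, A \<omega>, X \<omega>))
              (\<lambda>\<omega>. \<pi> (A \<omega>) (X \<omega>) * q (Z \<omega>) (A \<omega>) (X \<omega>)
                    - \<pi> (A \<omega>) (X \<omega>) * q0 (Z \<omega>) (A \<omega>) (X \<omega>)) \<omega>"
    and bdd2: "bdd_above {\<bar>(\<integral>\<omega>. - q (Z \<omega>) (A \<omega>) (X \<omega>) * \<pi> (A \<omega>) (X \<omega>) * h (W \<omega>) (A \<omega>) (X \<omega>)
                          + Top \<mu> \<pi> h (W \<omega>) (X \<omega>) \<partial>M)
                   - emp_mean D (\<lambda>(y, w, z, a, x). - q z a x * \<pi> a x * h w a x + Top \<mu> \<pi> h w x)\<bar>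
                  | q h. q \<in> QQ \<and> h \<in> HH'}"
  shows "l2norm M (condE M (MW \<Otimes>\<^sub>M \<mu> \<Otimes>\<^sub>M MX) (\<lambda>\<omega>. (W \<omega>, A \<omega>, X \<omega>))
              (\<lambda>\<omega>. \<pi> (A \<omega>) (X \<omega>) * qhat (Z \<omega>) (A \<omega>) (X \<omega>)
                    - \<pi> (A \<omega>) (X \<omega>) * q0 (Z \<omega>) (A \<omega>) (X \<omega>)))
         \<le> 2 * sqrt (Sup {\<bar>(\<integral>\<omega>. - q (Z \<omega>) (A \<omega>) (X \<omega>) * \<pi> (A \<omega>) (X \<omega>) * h (W \<omega>) (A \<omega>) (X \<omega>)
                          + Top \<mu> \<pi> h (W \<omega>) (X \<omega>) \<partial>M)
                   - emp_mean D (\<lambda>(y, w, z, a, x). - q z a x * \<pi> a x * h w a x + Top \<mu> \<pi> h w x)\<bar>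
                  | q h. q \<in> QQ \<and> h \<in> HH'})"
proof -
  let ?NW = "MW \<Otimes>\<^sub>M \<mu> \<Otimes>\<^sub>M MX"
  let ?V = "\<lambda>\<omega>. (W \<omega>, A \<omega>, X \<omega>)"
  let ?G = "gen M ?NW ?V"
  let ?S = "{\<bar>(\<integral>\<omega>. - q (Z \<omega>) (A \<omega>) (X \<omega>) * \<pi> (A \<omega>) (X \<omega>) * h (W \<omega>) (A \<omega>) (X \<omega>)
                          + Top \<mu> \<pi> h (W \<omega>) (X \<omega>) \<partial>M)
                   - emp_mean D (\<lambda>(y, w, z, a, x). - q z a x * \<pi> a x * h w a x + Top \<mu> \<pi> h w x)\<bar>
                  | q h. q \<in> QQ \<and> h \<in> HH'}"
  note [measurable] = measY measW measZ measA measX measU measpi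
  have measV[measurable]: "?V \<in> M \<rightarrow>\<^sub>M ?NW" by measurable
  interpret G: sigma_finite_subalgebra M ?G by (rule gen_subalg[OF M measV])
  interpret P: prob_space M by (rule M)
  define hV where "hV h = (\<lambda>\<omega>. h (W \<omega>) (A \<omega>) (X \<omega>))" for h :: "'w \<Rightarrow> 'a \<Rightarrow> 'x \<Rightarrow> real"
  define pqV where "pqV q = (\<lambda>\<omega>. \<pi> (A \<omega>) (X \<omega>) * q (Z \<omega>) (A \<omega>) (X \<omega>))" for q :: "'z \<Rightarrow> 'a \<Rightarrow> 'x \<Rightarrow> real"
  define TV where "TV h = (\<lambda>\<omega>. Top \<mu> \<pi> h (W \<omega>) (X \<omega>))" for h :: "'w \<Rightarrow> 'a \<Rightarrow> 'x \<Rightarrow> real"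
  have measZAX: "(\<lambda>\<omega>. (Z \<omega>, A \<omega>, X \<omega>)) \<in> M \<rightarrow>\<^sub>M MZ \<Otimes>\<^sub>M \<mu> \<Otimes>\<^sub>M MX" by measurable
  have hL: "hV h \<in> borel_measurable ?G \<and> hV h \<in> borel_measurable M \<and> integrable M (\<lambda>\<omega>. (hV h \<omega>)\<^sup>2)
      \<and> (\<lambda>(w, a, x). h w a x) \<in> borel_measurable ?NW" if "h \<in> HH'" for h
  proof -
    have L: "L2fun M ?NW ?V (\<lambda>(w, a, x). h w a x)"
      using HH'_L2 that by blast
    have "(\<lambda>\<omega>. (\<lambda>(w, a, x). h w a x) (?V \<omega>)) \<in> borel_measurable ?G"
      using gen_meas[OF measV] L unfolding L2fun_def by blast
    then have 1: "hV h \<in> borel_measurable ?G" unfolding hV_def by simp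
    then have "hV h \<in> borel_measurable M" by (rule measurable_from_subalg[OF G.subalg])
    then show ?thesis using 1 L unfolding L2fun_def hV_def by simp
  qed
  have qL: "pqV q \<in> borel_measurable M \<and> integrable M (\<lambda>\<omega>. (pqV q \<omega>)\<^sup>2)" if "q \<in> QQ" for q
  proof -
    have L: "L2fun M (MZ \<Otimes>\<^sub>M \<mu> \<Otimes>\<^sub>M MX) (\<lambda>\<omega>. (Z \<omega>, A \<omega>, X \<omega>)) (\<lambda>(z, a, x). \<pi> a x * q z a x)"
      using QQ_L2 that by blast
    have "(\<lambda>\<omega>. (\<lambda>(z, a, x). \<pi> a x * q z a x) (Z \<omega>, A \<omega>, X \<omega>)) \<in> borel_measurable M"
      using measurable_compose[OF measZAX] L unfolding L2fun_def by blast
    then show ?thesis using L unfolding L2fun_def pqV_def by simp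
  qed
  have intqh: "integrable M (\<lambda>\<omega>. pqV q \<omega> * hV h \<omega>)" if "q \<in> QQ" "h \<in> HH'" for q h
    using integrable_L2_mult[of "pqV q" M "hV h"] qL[OF that(1)] hL[OF that(2)] by blast
  have intT: "integrable M (TV h)" if "h \<in> HH'" for h
    unfolding TV_def
    by (rule Top_integrable[OF M mu measW measX measpi]) (use hL[OF that] HH'_T that in auto)
  have q0QQ: "q0 \<in> QQ" using q0 by blast
  have qhQQ: "qhat \<in> QQ" using qhat by blast
  have intp0: "integrable M (pqV q0)"
  proof -
    have "integrable M (\<lambda>\<omega>. pqV q0 \<omega> * 1)"
      by (rule integrable_L2_mult) (use qL[OF q0QQ] in auto)
    then show ?thesis by simp
  qed
  have key: "(\<integral>\<omega>. pqV q0 \<omega> * hV h \<omega> \<partial>M) = (\<integral>\<omega>. TV h \<omega> \<partial>M)" if hH: "h \<in> HH'" for h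
  proof -
    have fWm: "(\<lambda>(a, v). fW a v) \<in> borel_measurable (\<mu> \<Otimes>\<^sub>M (MW \<Otimes>\<^sub>M MX))"
      using dens_W unfolding cond_density_def by blast
    have rN: "(\<lambda>(w, a, x). \<pi> a x / fW a (w, x)) \<in> borel_measurable ?NW"
    proof -
      have 1: "(\<lambda>(w, a, x). (a, (w, x))) \<in> ?NW \<rightarrow>\<^sub>M \<mu> \<Otimes>\<^sub>M (MW \<Otimes>\<^sub>M MX)" by measurable
      have 2: "(\<lambda>(w, a, x). (a, x)) \<in> ?NW \<rightarrow>\<^sub>M \<mu> \<Otimes>\<^sub>M MX" by measurable
      have "(\<lambda>p. fW (fst (snd p)) (fst p, snd (snd p))) \<in> borel_measurable ?NW"
        using measurable_compose[OF 1 fWm] by (simp add: case_prod_beta')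
      moreover have "(\<lambda>p. \<pi> (fst (snd p)) (snd (snd p))) \<in> borel_measurable ?NW"
        using measurable_compose[OF 2 measpi] by (simp add: case_prod_beta')
      ultimately have "(\<lambda>p. \<pi> (fst (snd p)) (snd (snd p)) / fW (fst (snd p)) (fst p, snd (snd p))) \<in> borel_measurable ?NW"
        by measurable
      then show ?thesis by (simp add: case_prod_beta')
    qed
    define r where "r \<omega> = \<pi> (A \<omega>) (X \<omega>) / fW (A \<omega>) (W \<omega>, X \<omega>)" for \<omega>
    have rG: "r \<in> borel_measurable ?G"
      using gen_meas[OF measV rN] unfolding r_def by simp
    have ae0: "AE \<omega> in M. real_cond_exp M ?G (\<lambda>\<omega>. pqV q0 \<omega> - r \<omega>) \<omega> = 0"
    proof -
      have "AE \<omega> in M. condE M ?NW ?V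
        (\<lambda>\<omega>. \<pi> (A \<omega>) (X \<omega>) * (q0 (Z \<omega>) (A \<omega>) (X \<omega>) - 1 / fW (A \<omega>) (W \<omega>, X \<omega>))) \<omega> = 0"
        using q0 unfolding Q0obs_def by blast
      moreover have "(\<lambda>\<omega>. \<pi> (A \<omega>) (X \<omega>) * (q0 (Z \<omega>) (A \<omega>) (X \<omega>) - 1 / fW (A \<omega>) (W \<omega>, X \<omega>)))
          = (\<lambda>\<omega>. pqV q0 \<omega> - r \<omega>)"
        by (rule ext) (simp add: pqV_def r_def right_diff_distrib)
      ultimately show ?thesis unfolding condE_def by simp
    qed
    have cr: "AE \<omega> in M. real_cond_exp M ?G (pqV q0) \<omega> = r \<omega>"
      by (rule G.cond_exp_loc[OF _ intp0 rG ae0]) (simp add: P.finite_measure_axioms)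
    have "(\<integral>\<omega>. pqV q0 \<omega> * hV h \<omega> \<partial>M) = (\<integral>\<omega>. hV h \<omega> * pqV q0 \<omega> \<partial>M)"
      by (simp add: mult.commute)
    also have "\<dots> = (\<integral>\<omega>. hV h \<omega> * real_cond_exp M ?G (pqV q0) \<omega> \<partial>M)"
      by (rule G.real_cond_exp_intg(2)[symmetric]) (use intqh[OF q0QQ hH] hL[OF hH] qL[OF q0QQ] in \<open>auto simp: mult.commute\<close>)
    also have "\<dots> = (\<integral>\<omega>. hV h \<omega> * r \<omega> \<partial>M)"
    proof (rule integral_cong_AE)
      show "(\<lambda>\<omega>. hV h \<omega> * r \<omega>) \<in> borel_measurable M"
      proof -
        have 1: "hV h \<in> borel_measurable M" using hL[OF hH] by blast
        have 2: "r \<in> borel_measurable M" using measurable_from_subalg[OF G.subalg rG] .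
        show ?thesis using 1 2 by (rule borel_measurable_times)
      qed
    qed (use cr hL[OF hH] in auto)
    also have "\<dots> = (\<integral>\<omega>. TV h \<omega> \<partial>M)"
    proof -
      have hm: "(\<lambda>(w, a, x). h w a x) \<in> borel_measurable ?NW" using hL[OF hH] by blast
      have hT: "(AE \<omega> in M. integrable \<mu> (\<lambda>a. h (W \<omega>) a (X \<omega>) * \<pi> a (X \<omega>))) \<and>
                   integrable M (\<lambda>\<omega>. \<integral>a. \<bar>h (W \<omega>) a (X \<omega>) * \<pi> a (X \<omega>)\<bar> \<partial>\<mu>)"
        using HH'_T hH by blast
      show ?thesis unfolding hV_def r_def TV_def
        by (rule disint[OF M mu measW measZ measA measX measU measYa[rule_format, of undefined]
            dens_U dens_W NC4[rule_format, of undefined] NC5 measpi hm hT])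
    qed
    finally show ?thesis .
  qed
  define e where "e h q = (\<integral>\<omega>. - q (Z \<omega>) (A \<omega>) (X \<omega>) * \<pi> (A \<omega>) (X \<omega>) * h (W \<omega>) (A \<omega>) (X \<omega>)
                          + Top \<mu> \<pi> h (W \<omega>) (X \<omega>) \<partial>M)" for h q
  define n where "n h q = emp_mean D (\<lambda>(y, w, z, a, x). - q z a x * \<pi> a x * h w a x + Top \<mu> \<pi> h w x)" for h q
  define m where "m h q = emp_mean D (\<lambda>(y, w, z, a, x). \<pi> a x * q z a x * h w a x - Top \<mu> \<pi> h w x)" for h q
  have e_eq: "e h q = - (\<integral>\<omega>. pqV q \<omega> * hV h \<omega> \<partial>M) + (\<integral>\<omega>. TV h \<omega> \<partial>M)"
    if "q \<in> QQ" "h \<in> HH'" for q h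
  proof -
    have "e h q = (\<integral>\<omega>. - (pqV q \<omega> * hV h \<omega>) + TV h \<omega> \<partial>M)"
      unfolding e_def pqV_def hV_def TV_def by (rule Bochner_Integration.integral_cong) (auto simp: algebra_simps)
    also have "\<dots> = (\<integral>\<omega>. - (pqV q \<omega> * hV h \<omega>) \<partial>M) + (\<integral>\<omega>. TV h \<omega> \<partial>M)"
      by (rule Bochner_Integration.integral_add) (use intqh[OF that] intT[OF that(2)] in auto)
    finally show ?thesis by simp
  qed
  have e0: "e h q0 = 0" if "h \<in> HH'" for h
    using e_eq[OF q0QQ that] key[OF that] by simp
  have mn: "m h q = - n h q" for h q
    unfolding m_def n_def by (rule emp_mean_neg) (auto simp: algebra_simps)
  obtain hs where hs: "hs \<in> HH'" and hsAE: "AE \<omega> in M. hV hs \<omega> =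
      real_cond_exp M ?G (\<lambda>\<omega>. pqV qhat \<omega> - pqV q0 \<omega>) \<omega>"
    using proj2 qhQQ unfolding condE_def pqV_def hV_def by blast
  have inS: "\<bar>e s t - n s t\<bar> \<in> ?S" if "s \<in> HH'" "t \<in> QQ" for s t
    unfolding e_def n_def using that by blast
  have opt: "(SUP s\<in>HH'. ereal ((m s qhat)\<^sup>2)) \<le> (SUP s\<in>HH'. ereal ((m s q0)\<^sup>2))"
    unfolding m_def using qhat q0QQ by blast
  have core: "- e hs qhat \<le> 2 * Sup ?S \<and> 0 \<le> Sup ?S"
    by (rule core_ineq[where S=HH' and T=QQ and n=n and m=m, OF bdd2 inS q0QQ qhQQ hs e0 mn opt])
  define g where "g = real_cond_exp M ?G (\<lambda>\<omega>. pqV qhat \<omega> - pqV q0 \<omega>)"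
  have gm: "g \<in> borel_measurable M" unfolding g_def by simp
  have intd: "integrable M (\<lambda>\<omega>. hV hs \<omega> * (pqV qhat \<omega> - pqV q0 \<omega>))"
    using Bochner_Integration.integrable_diff[OF intqh[OF qhQQ hs] intqh[OF q0QQ hs]]
    by (simp add: algebra_simps)
  have "(\<integral>\<omega>. (g \<omega>)\<^sup>2 \<partial>M) = (\<integral>\<omega>. hV hs \<omega> * g \<omega> \<partial>M)"
    by (rule integral_cong_AE) (use gm hL[OF hs] hsAE in \<open>auto simp: g_def power2_eq_square\<close>)
  also have "\<dots> = (\<integral>\<omega>. hV hs \<omega> * (pqV qhat \<omega> - pqV q0 \<omega>) \<partial>M)"
    unfolding g_def
    by (rule G.real_cond_exp_intg(2)) (use intd hL[OF hs] qL[OF q0QQ] qL[OF qhQQ] in auto)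
  also have "\<dots> = (\<integral>\<omega>. pqV qhat \<omega> * hV hs \<omega> \<partial>M) - (\<integral>\<omega>. pqV q0 \<omega> * hV hs \<omega> \<partial>M)"
    using Bochner_Integration.integral_diff[OF intqh[OF qhQQ hs] intqh[OF q0QQ hs]]
    by (simp add: algebra_simps)
  also have "\<dots> = - e hs qhat"
    using e_eq[OF qhQQ hs] key[OF hs] by simp
  finally have Gb: "(\<integral>\<omega>. (g \<omega>)\<^sup>2 \<partial>M) \<le> 2 * Sup ?S" using core by linarith
  have "l2norm M g \<le> 2 * sqrt (Sup ?S)"
    unfolding l2norm_def by (rule sqrt_two_bound[OF Gb]) (use core in simp)
  then show ?thesis unfolding g_def condE_def pqV_def .
qed

theorem mainTheorem10:
  fixes M :: "'o measure" and \<mu> :: "'a measure"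
    and MU :: "'u measure" and MW :: "'w measure" and MZ :: "'z measure" and MX :: "'x measure"
    and Y :: "'o \<Rightarrow> real" and W :: "'o \<Rightarrow> 'w" and Z :: "'o \<Rightarrow> 'z" and A :: "'o \<Rightarrow> 'a"
    and X :: "'o \<Rightarrow> 'x" and U :: "'o \<Rightarrow> 'u"
    and Ya :: "'a \<Rightarrow> 'o \<Rightarrow> real" and Yaz :: "'a \<Rightarrow> 'z \<Rightarrow> 'o \<Rightarrow> real"
    and Waz :: "'a \<Rightarrow> 'z \<Rightarrow> 'o \<Rightarrow> 'w"
    and \<pi> :: "'a \<Rightarrow> 'x \<Rightarrow> real"
    and fU :: "'a \<Rightarrow> 'u \<times> 'x \<Rightarrow> real" and fW :: "'a \<Rightarrow> 'w \<times> 'x \<Rightarrow> real"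
    and D :: "(real \<times> 'w \<times> 'z \<times> 'a \<times> 'x) list"
    and HH :: "('w \<Rightarrow> 'a \<Rightarrow> 'x \<Rightarrow> real) set" and HH' :: "('w \<Rightarrow> 'a \<Rightarrow> 'x \<Rightarrow> real) set"
    and QQ :: "('z \<Rightarrow> 'a \<Rightarrow> 'x \<Rightarrow> real) set" and QQ' :: "('z \<Rightarrow> 'a \<Rightarrow> 'x \<Rightarrow> real) set"
    and hhat :: "'w \<Rightarrow> 'a \<Rightarrow> 'x \<Rightarrow> real" and qhat :: "'z \<Rightarrow> 'a \<Rightarrow> 'x \<Rightarrow> real"
  assumes M: "prob_space M" and mu: "sigma_finite_measure \<mu>"
    and measY: "Y \<in> borel_measurable M" and measW: "W \<in> M \<rightarrow>\<^sub>M MW"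
    and measZ: "Z \<in> M \<rightarrow>\<^sub>M MZ" and measA: "A \<in> M \<rightarrow>\<^sub>M \<mu>"
    and measX: "X \<in> M \<rightarrow>\<^sub>M MX" and measU: "U \<in> M \<rightarrow>\<^sub>M MU"
    and measYa: "\<forall>a. Ya a \<in> borel_measurable M"
    and measYaz: "\<forall>a z. Yaz a z \<in> borel_measurable M"
    and measWaz: "\<forall>a z. Waz a z \<in> M \<rightarrow>\<^sub>M MW"
    and measpi: "(\<lambda>(a, x). \<pi> a x) \<in> borel_measurable (\<mu> \<Otimes>\<^sub>M MX)"
    and dens_U: "cond_density M \<mu> A (MU \<Otimes>\<^sub>M MX) (\<lambda>\<omega>. (U \<omega>, X \<omega>)) fU"
    and dens_W: "cond_density M \<mu> A (MW \<Otimes>\<^sub>M MX) (\<lambda>\<omega>. (W \<omega>, X \<omega>)) fW"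
    \<comment> \<open>Assumption (NC)\<close>
    and NC1: "(AE \<omega> in M. Y \<omega> = Yaz (A \<omega>) (Z \<omega>) \<omega>) \<and> (AE \<omega> in M. W \<omega> = Waz (A \<omega>) (Z \<omega>) \<omega>)"
    and NC2: "\<forall>a z. AE \<omega> in M. Yaz a z \<omega> = Ya a \<omega>"
    and NC3: "\<forall>a z. AE \<omega> in M. Waz a z \<omega> = W \<omega>"
    and NC4: "\<forall>a. cond_indep M (gen M (MZ \<Otimes>\<^sub>M \<mu>) (\<lambda>\<omega>. (Z \<omega>, A \<omega>)))
                              (gen M (borel \<Otimes>\<^sub>M MW) (\<lambda>\<omega>. (Ya a \<omega>, W \<omega>)))
                              (gen M (MU \<Otimes>\<^sub>M MX) (\<lambda>\<omega>. (U \<omega>, X \<omega>)))"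
    and NC5: "\<forall>a x u. \<pi> a x \<noteq> 0 \<longrightarrow> fU a (u, x) \<noteq> 0"
    \<comment> \<open>Assumption (B)\<close>
    and B: "H0 M MW \<mu> MU MX Y W A U X \<noteq> {}" "Q0 M MZ \<mu> MU MX \<pi> fU Z A U X \<noteq> {}"
    \<comment> \<open>regularity of the outcome and of the function classes\<close>
    and Y_L2: "integrable M (\<lambda>\<omega>. (Y \<omega>)\<^sup>2)"
    and HH_L2: "\<forall>h\<in>HH. L2fun M (MW \<Otimes>\<^sub>M \<mu> \<Otimes>\<^sub>M MX) (\<lambda>\<omega>. (W \<omega>, A \<omega>, X \<omega>)) (\<lambda>(w, a, x). h w a x)"
    and HH'_L2: "\<forall>h\<in>HH'. L2fun M (MW \<Otimes>\<^sub>M \<mu> \<Otimes>\<^sub>M MX) (\<lambda>\<omega>. (W \<omega>, A \<omega>, X \<omega>)) (\<lambda>(w, a, x). h w a x)"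
    and HH'_T: "\<forall>h\<in>HH'. (AE \<omega> in M. integrable \<mu> (\<lambda>a. h (W \<omega>) a (X \<omega>) * \<pi> a (X \<omega>))) \<and>
                   integrable M (\<lambda>\<omega>. \<integral>a. \<bar>h (W \<omega>) a (X \<omega>) * \<pi> a (X \<omega>)\<bar> \<partial>\<mu>)"
    and QQ_L2: "\<forall>q\<in>QQ. L2fun M (MZ \<Otimes>\<^sub>M \<mu> \<Otimes>\<^sub>M MX) (\<lambda>\<omega>. (Z \<omega>, A \<omega>, X \<omega>)) (\<lambda>(z, a, x). \<pi> a x * q z a x)"
    and QQ'_L2: "\<forall>q\<in>QQ'. L2fun M (MZ \<Otimes>\<^sub>M \<mu> \<Otimes>\<^sub>M MX) (\<lambda>\<omega>. (Z \<omega>, A \<omega>, X \<omega>)) (\<lambda>(z, a, x). q z a x)"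
    \<comment> \<open>the sample and the estimators without stabilizers\<close>
    and D: "D \<noteq> []"
    and hhat: "hhat \<in> HH \<and> (\<forall>h\<in>HH.
       (SUP q\<in>QQ'. ereal ((emp_mean D (\<lambda>(y, w, z, a, x). q z a x * (hhat w a x - y)))\<^sup>2))
         \<le> (SUP q\<in>QQ'. ereal ((emp_mean D (\<lambda>(y, w, z, a, x). q z a x * (h w a x - y)))\<^sup>2)))"
    and qhat: "qhat \<in> QQ \<and> (\<forall>q\<in>QQ.
       (SUP h\<in>HH'. ereal ((emp_mean D (\<lambda>(y, w, z, a, x).
             \<pi> a x * qhat z a x * h w a x - Top \<mu> \<pi> h w x))\<^sup>2))
         \<le> (SUP h\<in>HH'. ereal ((emp_mean D (\<lambda>(y, w, z, a, x).
             \<pi> a x * q z a x * h w a x - Top \<mu> \<pi> h w x))\<^sup>2)))"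
  shows
   "(\<forall>h0. h0 \<in> HH \<inter> H0obs M MW MZ \<mu> MX Y W Z A X \<longrightarrow>
       (\<forall>h\<in>HH. \<exists>q\<in>QQ'. AE \<omega> in M. q (Z \<omega>) (A \<omega>) (X \<omega>) =
            condE M (MZ \<Otimes>\<^sub>M \<mu> \<Otimes>\<^sub>M MX) (\<lambda>\<omega>. (Z \<omega>, A \<omega>, X \<omega>))
              (\<lambda>\<omega>. h (W \<omega>) (A \<omega>) (X \<omega>) - h0 (W \<omega>) (A \<omega>) (X \<omega>)) \<omega>) \<longrightarrow>
       (\<forall>q\<in>QQ'. (\<lambda>z a x. - q z a x) \<in> QQ') \<longrightarrow>
       bdd_above {\<bar>(\<integral>\<omega>. (Y \<omega> - h (W \<omega>) (A \<omega>) (X \<omega>)) * q (Z \<omega>) (A \<omega>) (X \<omega>) \<partial>M)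
                   - emp_mean D (\<lambda>(y, w, z, a, x). (y - h w a x) * q z a x)\<bar> | q h. q \<in> QQ' \<and> h \<in> HH} \<longrightarrow>
       l2norm M (condE M (MZ \<Otimes>\<^sub>M \<mu> \<Otimes>\<^sub>M MX) (\<lambda>\<omega>. (Z \<omega>, A \<omega>, X \<omega>))
              (\<lambda>\<omega>. hhat (W \<omega>) (A \<omega>) (X \<omega>) - h0 (W \<omega>) (A \<omega>) (X \<omega>)))
         \<le> 2 * sqrt (Sup {\<bar>(\<integral>\<omega>. (Y \<omega> - h (W \<omega>) (A \<omega>) (X \<omega>)) * q (Z \<omega>) (A \<omega>) (X \<omega>) \<partial>M)
                   - emp_mean D (\<lambda>(y, w, z, a, x). (y - h w a x) * q z a x)\<bar> | q h. q \<in> QQ' \<and> h \<in> HH}))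
    \<and>
    (\<forall>q0. q0 \<in> QQ \<inter> Q0obs M MW MZ \<mu> MX \<pi> fW W Z A X \<longrightarrow>
       (\<forall>q\<in>QQ. \<exists>h\<in>HH'. AE \<omega> in M. h (W \<omega>) (A \<omega>) (X \<omega>) =
            condE M (MW \<Otimes>\<^sub>M \<mu> \<Otimes>\<^sub>M MX) (\<lambda>\<omega>. (W \<omega>, A \<omega>, X \<omega>))
              (\<lambda>\<omega>. \<pi> (A \<omega>) (X \<omega>) * q (Z \<omega>) (A \<omega>) (X \<omega>)
                    - \<pi> (A \<omega>) (X \<omega>) * q0 (Z \<omega>) (A \<omega>) (X \<omega>)) \<omega>) \<longrightarrow>
       (\<forall>h\<in>HH'. (\<lambda>w a x. - h w a x) \<in> HH') \<longrightarrow>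
       bdd_above {\<bar>(\<integral>\<omega>. - q (Z \<omega>) (A \<omega>) (X \<omega>) * \<pi> (A \<omega>) (X \<omega>) * h (W \<omega>) (A \<omega>) (X \<omega>)
                          + Top \<mu> \<pi> h (W \<omega>) (X \<omega>) \<partial>M)
                   - emp_mean D (\<lambda>(y, w, z, a, x). - q z a x * \<pi> a x * h w a x + Top \<mu> \<pi> h w x)\<bar>
                  | q h. q \<in> QQ \<and> h \<in> HH'} \<longrightarrow>
       l2norm M (condE M (MW \<Otimes>\<^sub>M \<mu> \<Otimes>\<^sub>M MX) (\<lambda>\<omega>. (W \<omega>, A \<omega>, X \<omega>))
              (\<lambda>\<omega>. \<pi> (A \<omega>) (X \<omega>) * qhat (Z \<omega>) (A \<omega>) (X \<omega>)
                    - \<pi> (A \<omega>) (X \<omega>) * q0 (Z \<omega>) (A \<omega>) (X \<omega>)))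
         \<le> 2 * sqrt (Sup {\<bar>(\<integral>\<omega>. - q (Z \<omega>) (A \<omega>) (X \<omega>) * \<pi> (A \<omega>) (X \<omega>) * h (W \<omega>) (A \<omega>) (X \<omega>)
                          + Top \<mu> \<pi> h (W \<omega>) (X \<omega>) \<partial>M)
                   - emp_mean D (\<lambda>(y, w, z, a, x). - q z a x * \<pi> a x * h w a x + Top \<mu> \<pi> h w x)\<bar>
                  | q h. q \<in> QQ \<and> h \<in> HH'}))"
  apply (intro conjI allI impI)
  subgoal premises prems for h0
    by (rule part1[OF M measY measW measZ measA measX Y_L2 HH_L2 QQ'_L2 hhat prems(1) prems(2) prems(4)])
  subgoal premises prems for q0
    by (rule part2[OF assms prems(1) prems(2) prems(4)])
  done

end
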